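(* Let $\mu$ be a nonzero bounded positive Borel measure on $\mathbb{R}$ with bounded support. Let $\lambda>0$ and let $(f_n)\subset l^2(\mathbb{Z})$ be a maximizing sequence for $P^d_\lambda$, i.e. $\|f_n\|_{l^2}^2=\lambda$ and $\lim_n\mathcal{Q}^d_\mu(f_n,f_n,f_n,f_n)=P^d_\lambda$. Then there exist $\xi_n\in\mathbb{Z}$ such that $$\lim_{R\to\infty}\sup_{n\in\mathbb{N}}\sum_{x\in\mathbb{Z},\,|x-\xi_n|>R}|f_n(x)|^2=0.$$
   Context: $\Delta f(x)=f(x+1)+f(x-1)-2f(x)$ on $l^2(\mathbb{Z})$, $S_r=e^{ir\Delta}$; $\mathcal{Q}^d_\mu(f_1,f_2,f_3,f_4)=\sum_{x\in\mathbb{Z}}\int\overline{(S_rf_1)(x)}(S_rf_2)(x)\overline{(S_rf_3)(x)}(S_rf_4)(x)\,\mu(dr)$; $P^d_\lambda=\sup\{\mathcal{Q}^d_\mu(f,f,f,f):\|f\|_{l^2}^2=\lambda\}$. *)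

theory Defs
  imports "HOL-Analysis.Analysis" "HOL-Probability.Probability"
begin

definition in_l2 :: "(int \<Rightarrow> complex) \<Rightarrow> bool" where
  "in_l2 f \<longleftrightarrow> (\<lambda>x. (norm (f x))\<^sup>2) summable_on UNIV"

definition l2_norm_sq :: "(int \<Rightarrow> complex) \<Rightarrow> real" where
  "l2_norm_sq f = (\<Sum>\<^sub>\<infinity>x. (norm (f x))\<^sup>2)"

definition dlap :: "(int \<Rightarrow> complex) \<Rightarrow> (int \<Rightarrow> complex)" where
  "dlap f = (\<lambda>x. f (x + 1) + f (x - 1) - 2 * f x)"

text \<open>S_r = exp (i r Delta), the exponential of the bounded operator i r Delta,
  given by its (norm convergent) power series, evaluated pointwise.\<close>

definition dS :: "real \<Rightarrow> (int \<Rightarrow> complex) \<Rightarrow> (int \<Rightarrow> complex)" where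
  "dS r f = (\<lambda>x. \<Sum>k. (\<i> * complex_of_real r) ^ k / of_nat (fact k) * ((dlap ^^ k) f) x)"

definition Qd :: "real measure \<Rightarrow> (int \<Rightarrow> complex) \<Rightarrow> (int \<Rightarrow> complex) \<Rightarrow>
    (int \<Rightarrow> complex) \<Rightarrow> (int \<Rightarrow> complex) \<Rightarrow> complex" where
  "Qd \<mu> f1 f2 f3 f4 = (\<Sum>\<^sub>\<infinity>x. integral\<^sup>L \<mu> (\<lambda>r.
      cnj (dS r f1 x) * dS r f2 x * cnj (dS r f3 x) * dS r f4 x))"

text \<open>Q(f,f,f,f) is real (it equals sum of integrals of |S_r f|^4), so we take the
  supremum of its real part.\<close>

definition Pd :: "real measure \<Rightarrow> real \<Rightarrow> real" where
  "Pd \<mu> lam = Sup {Re (Qd \<mu> f f f f) | f. in_l2 f \<and> l2_norm_sq f = lam}"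

end

theory Submission
  imports Defs
begin

definition Aop :: "(int \<Rightarrow> real) \<Rightarrow> int \<Rightarrow> real" where
  "Aop g x = g (x+1) + g (x-1) + 2 * g x"

definition wt :: "real \<Rightarrow> nat \<Rightarrow> real" where
  "wt R k = R^k / fact k"

definition Mop :: "real \<Rightarrow> (int \<Rightarrow> real) \<Rightarrow> int \<Rightarrow> real" where
  "Mop R g x = (\<Sum>k. wt R k * (Aop^^k) g x)"

lemma Aop_apply: "Aop g x = g (x+1) + g (x-1) + 2 * g x"
  by (simp add: Aop_def)

lemma Aop_pow_Suc: "(Aop^^Suc k) g x = (Aop^^k) g (x+1) + (Aop^^k) g (x-1) + 2 * (Aop^^k) g x"
  by (simp add: Aop_apply)

lemma dlap_pow_Suc: "(dlap^^Suc k) f x = (dlap^^k) f (x+1) + (dlap^^k) f (x-1) - 2 * (dlap^^k) f x"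
  by (simp add: dlap_def)

lemma wt_sums: "(\<lambda>k. wt R k * c^k) sums exp (R*c)"
proof -
  have "(\<lambda>n. (R*c)^n /\<^sub>R fact n) sums exp (R*c)" by (rule exp_converges)
  moreover have "(\<lambda>n. (R*c)^n /\<^sub>R fact n) = (\<lambda>k. wt R k * c^k)"
    by (auto simp: wt_def power_mult_distrib field_simps)
  ultimately show ?thesis by simp
qed

lemma wt_nonneg: "R \<ge> 0 \<Longrightarrow> wt R k \<ge> 0"
  by (simp add: wt_def)

lemma Aop_pow_bound:
  assumes "\<And>y. 0 \<le> g y" "\<And>y. g y \<le> B"
  shows "0 \<le> (Aop^^k) g x \<and> (Aop^^k) g x \<le> 4^k * B"
proof (induction k arbitrary: x)
  case 0 then show ?case using assms by simp
next
  case (Suc k)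
  have a: "0 \<le> (Aop^^k) g y \<and> (Aop^^k) g y \<le> 4^k * B" for y using Suc by blast
  have e: "4^Suc k * B = 4 * (4^k * B)" by simp
  show ?case
    using a[of "x+1"] a[of "x-1"] a[of x] unfolding Aop_pow_Suc e by linarith
qed

lemma Aop_pow_mono:
  assumes "\<And>y. g y \<le> h y"
  shows "(Aop^^k) g x \<le> (Aop^^k) h x"
proof (induction k arbitrary: x)
  case 0 then show ?case using assms by simp
next
  case (Suc k)
  show ?case using Suc[of "x+1"] Suc[of "x-1"] Suc[of x] unfolding Aop_pow_Suc by linarith
qed

lemma Aop_pow_add:
  "(Aop^^k) (\<lambda>y. g y + h y) x = (Aop^^k) g x + (Aop^^k) h x"
proof (induction k arbitrary: x)
  case 0 then show ?case by simp
next
  case (Suc k)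
  show ?case unfolding Aop_pow_Suc Suc by (simp add: algebra_simps)
qed

lemma Aop_pow_local:
  assumes "\<And>z. \<bar>z - x\<bar> \<le> int k \<Longrightarrow> g z = 0"
  shows "(Aop^^k) g x = 0"
  using assms
proof (induction k arbitrary: x)
  case 0 then show ?case by simp
next
  case (Suc k)
  have "(Aop^^k) g (x+1) = 0" by (rule Suc.IH) (rule Suc.prems, auto)
  moreover have "(Aop^^k) g (x-1) = 0" by (rule Suc.IH) (rule Suc.prems, auto)
  moreover have "(Aop^^k) g x = 0" by (rule Suc.IH) (rule Suc.prems, auto)
  ultimately show ?case unfolding Aop_pow_Suc by linarith
qed

lemma dlap_pow_bound:
  "norm ((dlap^^k) f x) \<le> (Aop^^k) (\<lambda>y. norm (f y)) x"
proof (induction k arbitrary: x)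
  case 0 then show ?case by simp
next
  case (Suc k)
  let ?D = "(dlap^^k) f"
  have "norm ((dlap^^Suc k) f x) = norm (?D (x+1) + ?D (x-1) - 2 * ?D x)"
    by (simp only: dlap_pow_Suc)
  also have "\<dots> \<le> norm (?D (x+1)) + norm (?D (x-1)) + 2 * norm (?D x)"
    proof -
    have "norm (?D (x+1) + ?D (x-1) - 2 * ?D x) \<le> norm (?D (x+1) + ?D (x-1)) + norm (2 * ?D x)"
      by (rule norm_triangle_ineq4)
    also have "\<dots> \<le> norm (?D (x+1)) + norm (?D (x-1)) + norm (2 * ?D x)"
      using norm_triangle_ineq by simp
    finally show ?thesis by (simp add: norm_mult)
  qed
  also have "\<dots> \<le> (Aop^^Suc k) (\<lambda>y. norm (f y)) x"
    unfolding Aop_pow_Suc using Suc[of "x+1"] Suc[of "x-1"] Suc[of x] by linarith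
  finally show ?case .
qed

lemma dlap_pow_add:
  "(dlap^^k) (\<lambda>y. f y + g y) x = (dlap^^k) f x + (dlap^^k) g x"
proof (induction k arbitrary: x)
  case 0 then show ?case by simp
next
  case (Suc k)
  show ?case unfolding dlap_pow_Suc Suc by (simp add: algebra_simps)
qed

lemma dlap_pow_scale:
  "(dlap^^k) (\<lambda>y. c * f y) x = c * (dlap^^k) f x"
proof (induction k arbitrary: x)
  case 0 then show ?case by simp
next
  case (Suc k)
  show ?case unfolding dlap_pow_Suc Suc by (simp add: algebra_simps)
qed


lemma sum_le_infsum_nonneg:
  fixes f :: "'a \<Rightarrow> real"
  assumes "f summable_on A" "finite F" "F \<subseteq> A" "\<And>x. x \<in> A \<Longrightarrow> 0 \<le> f x"
  shows "sum f F \<le> infsum f A"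
proof -
  have "infsum f F \<le> infsum f A"
    by (rule infsum_mono_neutral) (use assms in auto)
  then show ?thesis using assms(2) by simp
qed

lemma single_le_infsum_nonneg:
  fixes f :: "'a \<Rightarrow> real"
  assumes "f summable_on A" "x \<in> A" "\<And>x. x \<in> A \<Longrightarrow> 0 \<le> f x"
  shows "f x \<le> infsum f A"
  using sum_le_infsum_nonneg[OF assms(1) _ _ assms(3), of "{x}"] assms(2) by simp

lemma infsum_le_of_finite_sums_nonneg:
  fixes f :: "'a \<Rightarrow> real"
  assumes "\<And>x. x \<in> A \<Longrightarrow> 0 \<le> f x"
    and "\<And>F. finite F \<Longrightarrow> F \<subseteq> A \<Longrightarrow> sum f F \<le> B"
  shows "f summable_on A \<and> infsum f A \<le> B"
proof -
  have s: "f summable_on A"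
    by (rule nonneg_bdd_above_summable_on) (use assms in \<open>auto intro!: bdd_aboveI\<close>)
  then show ?thesis using infsum_le_finite_sums[OF s] assms(2) by blast
qed

lemma series_CS:
  fixes v a :: "nat \<Rightarrow> real"
  assumes v0: "\<And>k. 0 \<le> v k" and sv: "summable v" and sva: "summable (\<lambda>k. v k * (a k)\<^sup>2)"
  shows "summable (\<lambda>k. v k * a k) \<and> (\<Sum>k. v k * a k)\<^sup>2 \<le> (\<Sum>k. v k) * (\<Sum>k. v k * (a k)\<^sup>2)"
proof -
  have s1: "summable (\<lambda>k. v k * a k)"
  proof (rule summable_comparison_test[where g="\<lambda>k. (v k + v k * (a k)\<^sup>2) / 2"])
    show "\<exists>N. \<forall>n\<ge>N. norm (v n * a n) \<le> (v n + v n * (a n)\<^sup>2) / 2"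
    proof (intro exI allI impI)
      fix n
      have "0 \<le> (\<bar>a n\<bar> - 1)\<^sup>2" by simp
      then have "2 * \<bar>a n\<bar> \<le> 1 + (a n)\<^sup>2" by (simp add: power2_diff power2_abs)
      then have "v n * (2 * \<bar>a n\<bar>) \<le> v n * (1 + (a n)\<^sup>2)" using v0[of n] by (rule mult_left_mono)
      then show "norm (v n * a n) \<le> (v n + v n * (a n)\<^sup>2) / 2"
        using v0[of n] by (simp add: abs_mult algebra_simps)
    qed
    show "summable (\<lambda>k. (v k + v k * (a k)\<^sup>2) / 2)"
      using summable_add[OF sv sva] by (rule summable_divide)
  qed
  define S where "S = (\<Sum>k. v k)"
  define P where "P = (\<Sum>k. v k * a k)"
  define Q where "Q = (\<Sum>k. v k * (a k)\<^sup>2)"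
  have key: "0 \<le> Q - 2 * t * P + t\<^sup>2 * S" for t
  proof -
    have e: "(\<lambda>k. v k * (a k - t)\<^sup>2) = (\<lambda>k. (v k * (a k)\<^sup>2 - (2*t) * (v k * a k)) + t\<^sup>2 * v k)"
      by (auto simp: power2_eq_square algebra_simps)
    have "(\<Sum>k. v k * (a k - t)\<^sup>2) = Q - 2 * t * P + t\<^sup>2 * S"
      unfolding e S_def P_def Q_def
      using sva s1 sv
      by (subst suminf_add[symmetric]) (auto intro!: summable_diff summable_mult simp: suminf_diff[symmetric] suminf_mult)
    moreover have "0 \<le> (\<Sum>k. v k * (a k - t)\<^sup>2)"
    proof (rule suminf_nonneg)
      show "summable (\<lambda>k. v k * (a k - t)\<^sup>2)" unfolding e
        using sva s1 sv by (auto intro!: summable_add summable_diff summable_mult)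
    qed (use v0 in auto)
    ultimately show ?thesis by simp
  qed
  have "P\<^sup>2 \<le> S * Q"
  proof (cases "S > 0")
    case True
    have "0 \<le> Q - 2 * (P/S) * P + (P/S)\<^sup>2 * S" by (rule key)
    also have "\<dots> = Q - P\<^sup>2 / S" using True by (simp add: power2_eq_square field_simps)
    finally have "P\<^sup>2 / S \<le> Q" by simp
    then show ?thesis using True by (simp add: field_simps)
  next
    case False
    have "S \<ge> 0" unfolding S_def using sv v0 by (rule suminf_nonneg)
    with False have "S = 0" by simp
    then have "\<forall>k. v k = 0" unfolding S_def using suminf_eq_zero_iff[OF sv] v0 by auto
    then have "P = 0" unfolding P_def by simp
    then show ?thesis by (simp add: \<open>S = 0\<close>)
  qed
  then show ?thesis using s1 unfolding S_def P_def Q_def by simp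
qed

section \<open>The majorant operator\<close>

lemma wt_summable: "summable (\<lambda>k. wt R k * c^k)"
  using wt_sums sums_summable by blast

lemma wt_summable0: "summable (wt R)"
  using wt_summable[of R 1] by simp

lemma wt_suminf: "(\<Sum>k. wt R k * c^k) = exp (R*c)"
  using wt_sums sums_unique by metis

lemma Mop_summable:
  assumes "R \<ge> 0" "\<And>y. 0 \<le> g y" "\<And>y. g y \<le> B"
  shows "summable (\<lambda>k. wt R k * (Aop^^k) g x)"
proof (rule summable_comparison_test[where g="\<lambda>k. (wt R k * 4^k) * B"])
  show "\<exists>N. \<forall>n\<ge>N. norm (wt R n * (Aop ^^ n) g x) \<le> wt R n * 4 ^ n * B"
  proof (intro exI allI impI)
    fix n
    have b: "0 \<le> (Aop ^^ n) g x" "(Aop ^^ n) g x \<le> 4^n * B"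
      using Aop_pow_bound[of g B, OF assms(2,3)] by auto
    have "norm (wt R n * (Aop ^^ n) g x) = wt R n * (Aop ^^ n) g x"
      using b wt_nonneg[OF assms(1), of n] by (simp add: abs_mult)
    also have "\<dots> \<le> wt R n * (4^n * B)"
      using b wt_nonneg[OF assms(1), of n] by (intro mult_left_mono) auto
    finally show "norm (wt R n * (Aop ^^ n) g x) \<le> wt R n * 4 ^ n * B" by (simp add: mult.assoc)
  qed
  show "summable (\<lambda>k. wt R k * 4 ^ k * B)" using wt_summable by (rule summable_mult2)
qed

lemma Mop_bound:
  assumes "R \<ge> 0" "\<And>y. 0 \<le> g y" "\<And>y. g y \<le> B"
  shows "0 \<le> Mop R g x \<and> Mop R g x \<le> exp (4*R) * B"
proof
  show "0 \<le> Mop R g x" unfolding Mop_def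
    using Mop_summable[OF assms] Aop_pow_bound[of g B, OF assms(2,3)] wt_nonneg[OF assms(1)]
    by (auto intro!: suminf_nonneg)
  have "Mop R g x \<le> (\<Sum>k. wt R k * 4^k * B)" unfolding Mop_def
    using Mop_summable[OF assms] Aop_pow_bound[of g B, OF assms(2,3)] wt_nonneg[OF assms(1)]
  proof (intro suminf_le)
    show "summable (\<lambda>k. wt R k * (Aop ^^ k) g x)" by (rule Mop_summable[OF assms])
    show "summable (\<lambda>k. wt R k * 4^k * B)" using wt_summable by (rule summable_mult2)
    fix n
    have b: "0 \<le> (Aop ^^ n) g x" "(Aop ^^ n) g x \<le> 4^n * B"
      using Aop_pow_bound[of g B, OF assms(2,3)] by auto
    have "wt R n * (Aop ^^ n) g x \<le> wt R n * (4^n * B)"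
      using b wt_nonneg[OF assms(1), of n] by (intro mult_left_mono) auto
    then show "wt R n * (Aop ^^ n) g x \<le> wt R n * 4 ^ n * B" by (simp add: mult.assoc)
  qed
  also have "\<dots> = exp (4*R) * B"
    using wt_suminf[of R 4] suminf_mult2[OF wt_summable[of R 4], of B] by (simp add: mult.commute)
  finally show "Mop R g x \<le> exp (4*R) * B" .
qed

lemma Mop_add:
  assumes "R \<ge> 0" "\<And>y. 0 \<le> g y" "\<And>y. g y \<le> B" "\<And>y. 0 \<le> h y" "\<And>y. h y \<le> B'"
  shows "Mop R (\<lambda>y. g y + h y) x = Mop R g x + Mop R h x"
  unfolding Mop_def Aop_pow_add
  using suminf_add[OF Mop_summable[OF assms(1-3)] Mop_summable[OF assms(1,4,5)]]
  by (simp add: algebra_simps)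

lemma Mop_mono:
  assumes "R \<ge> 0" "\<And>y. 0 \<le> g y" "\<And>y. g y \<le> h y" "\<And>y. h y \<le> B"
  shows "Mop R g x \<le> Mop R h x"
proof -
  have hb: "\<And>y. 0 \<le> h y" using assms(2,3) order_trans by blast
  have gB: "\<And>y. g y \<le> B" using assms(3,4) order_trans by blast
  show ?thesis unfolding Mop_def
    using Mop_summable[of R g B x] Mop_summable[of R h B x] assms hb gB
      wt_nonneg[OF assms(1)] Aop_pow_mono[of g h, OF assms(3)] order_trans
    by (intro suminf_le) (auto intro!: mult_left_mono)
qed

lemma shift_summable:
  fixes g :: "int \<Rightarrow> real"
  assumes "g summable_on UNIV"
  shows "(\<lambda>x. g (x + c)) summable_on UNIV \<and> infsum (\<lambda>x. g (x + c)) UNIV = infsum g UNIV"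
proof -
  have b: "bij_betw (\<lambda>x. x + c) UNIV UNIV"
    by (rule bij_betwI[where g="\<lambda>x. x - c"]) auto
  show ?thesis
    using summable_on_reindex_bij_betw[OF b, of g] infsum_reindex_bij_betw[OF b, of g] assms by simp
qed

lemma Aop_l2:
  fixes g :: "int \<Rightarrow> real"
  assumes "(\<lambda>x. (g x)\<^sup>2) summable_on UNIV"
  shows "(\<lambda>x. (Aop g x)\<^sup>2) summable_on UNIV \<and>
         infsum (\<lambda>x. (Aop g x)\<^sup>2) UNIV \<le> 16 * infsum (\<lambda>x. (g x)\<^sup>2) UNIV"
proof -
  let ?G = "infsum (\<lambda>x. (g x)\<^sup>2) UNIV"
  have s1: "(\<lambda>x. (g (x + 1))\<^sup>2) summable_on UNIV" "infsum (\<lambda>x. (g (x + 1))\<^sup>2) UNIV = ?G"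
    using shift_summable[OF assms, of 1] by auto
  have s2: "(\<lambda>x. (g (x + -1))\<^sup>2) summable_on UNIV" "infsum (\<lambda>x. (g (x + -1))\<^sup>2) UNIV = ?G"
    using shift_summable[OF assms, of "-1"] by auto
  have pw: "(Aop g x)\<^sup>2 \<le> 4 * (g (x+1))\<^sup>2 + 4 * (g (x + -1))\<^sup>2 + 8 * (g x)\<^sup>2" for x
  proof -
    have "(a + b + 2*c)\<^sup>2 \<le> 4*a\<^sup>2 + 4*b\<^sup>2 + 8*c\<^sup>2" for a b c :: real
    proof -
      have "0 \<le> (a-b)\<^sup>2 + 2*(a-c)\<^sup>2 + 2*(b-c)\<^sup>2" by simp
      then show ?thesis by (simp add: power2_eq_square algebra_simps)
    qed
    then show ?thesis by (simp add: Aop_apply)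
  qed
  have sR: "(\<lambda>x. 4 * (g (x+1))\<^sup>2 + 4 * (g (x + -1))\<^sup>2 + 8 * (g x)\<^sup>2) summable_on UNIV"
    using s1(1) s2(1) assms by (intro summable_on_add summable_on_cmult_right) auto
  have sA: "(\<lambda>x. (Aop g x)\<^sup>2) summable_on UNIV"
    by (rule summable_on_comparison_test[OF sR]) (use pw in auto)
  have "infsum (\<lambda>x. (Aop g x)\<^sup>2) UNIV \<le> infsum (\<lambda>x. 4 * (g (x+1))\<^sup>2 + 4 * (g (x + -1))\<^sup>2 + 8 * (g x)\<^sup>2) UNIV"
    by (rule infsum_mono[OF sA sR]) (use pw in auto)
  also have "\<dots> = 16 * ?G"
    using s1 s2 assms
    by (simp add: infsum_add summable_on_add summable_on_cmult_right infsum_cmult_right)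
  finally show ?thesis using sA by simp
qed

lemma Aop_pow_l2:
  fixes g :: "int \<Rightarrow> real"
  assumes "(\<lambda>x. (g x)\<^sup>2) summable_on UNIV"
  shows "(\<lambda>x. ((Aop^^k) g x)\<^sup>2) summable_on UNIV \<and>
         infsum (\<lambda>x. ((Aop^^k) g x)\<^sup>2) UNIV \<le> 16^k * infsum (\<lambda>x. (g x)\<^sup>2) UNIV"
proof (induction k)
  case 0 then show ?case using assms by simp
next
  case (Suc k)
  have "(Aop^^Suc k) g = Aop ((Aop^^k) g)" by simp
  with Aop_l2[of "(Aop^^k) g"] Suc show ?case by (auto simp: mult.assoc)
qed

lemma l2_pointwise:
  fixes g :: "int \<Rightarrow> real"
  assumes "(\<lambda>x. (g x)\<^sup>2) summable_on UNIV"
  shows "(g x)\<^sup>2 \<le> infsum (\<lambda>x. (g x)\<^sup>2) UNIV"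
  using single_le_infsum_nonneg[OF assms] by simp

definition tw :: "real \<Rightarrow> nat \<Rightarrow> real" where
  "tw R N = (\<Sum>k. if N \<le> k then wt R k else 0)"

lemma tw_alt: "tw R N = exp R - (\<Sum>k<N. wt R k)"
proof -
  have e: "(\<lambda>k. if N \<le> k then wt R k else 0) = (\<lambda>k. wt R k - (if k < N then wt R k else 0))"
    by auto
  have f: "(\<Sum>k. if k < N then wt R k else 0) = (\<Sum>k<N. wt R k)"
    by (subst suminf_finite[of "{..<N}"]) auto
  have s2: "summable (\<lambda>k. if k < N then wt R k else 0)"
    by (rule summable_finite[of "{..<N}"]) auto
  show ?thesis unfolding tw_def e
    using suminf_diff[OF wt_summable0[of R] s2] f wt_suminf[of R 1] by simp
qed

lemma tw_0: "tw R 0 = exp R"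
  by (simp add: tw_alt)

lemma tw_lim: "tw R \<longlonglongrightarrow> 0"
proof -
  have "(\<lambda>N. exp R - (\<Sum>k<N. wt R k)) \<longlonglongrightarrow> exp R - exp R"
    using summable_LIMSEQ[OF wt_summable0[of R]] wt_suminf[of R 1]
    by (intro tendsto_diff) auto
  then show ?thesis unfolding tw_alt[abs_def] by simp
qed

lemma tw_summable: "R \<ge> 0 \<Longrightarrow> summable (\<lambda>k. if N \<le> k then wt R k else 0)"
  by (rule summable_comparison_test[OF _ wt_summable0[of R]]) (auto simp: wt_nonneg)

lemma tw_nonneg: "R \<ge> 0 \<Longrightarrow> tw R N \<ge> 0"
  unfolding tw_def
  by (rule suminf_nonneg[OF tw_summable]) (auto simp: wt_nonneg)

lemma Mop_l2_local:
  fixes g :: "int \<Rightarrow> real"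
  assumes R: "R \<ge> 0" and g0: "\<And>y. 0 \<le> g y" and gs: "(\<lambda>x. (g x)\<^sup>2) summable_on UNIV"
    and loc: "\<And>x z. x \<in> X \<Longrightarrow> \<bar>z - x\<bar> < int N \<Longrightarrow> g z = 0"
  shows "(\<lambda>x. (Mop R g x)\<^sup>2) summable_on X \<and>
         infsum (\<lambda>x. (Mop R g x)\<^sup>2) X \<le> tw R N * exp (16*R) * infsum (\<lambda>x. (g x)\<^sup>2) UNIV"
proof -
  define G where "G = infsum (\<lambda>x. (g x)\<^sup>2) UNIV"
  define B where "B = sqrt G"
  have gB: "g y \<le> B" for y
    unfolding B_def G_def using l2_pointwise[OF gs, of y] g0[of y] real_le_rsqrt by blast
  define a where "a x k = (Aop^^k) g x" for x k
  have a0: "0 \<le> a x k" "a x k \<le> 4^k * B" for x k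
    using Aop_pow_bound[of g B, OF g0 gB] unfolding a_def by auto
  define v where "v k = (if N \<le> k then wt R k else 0)" for k
  have v0: "0 \<le> v k" for k using wt_nonneg[OF R] by (simp add: v_def)
  have sv: "summable v" unfolding v_def
    by (rule summable_comparison_test[OF _ wt_summable0[of R]]) (auto simp: wt_nonneg[OF R])
  have swa: "summable (\<lambda>k. wt R k * (a x k)\<^sup>2)" for x
  proof (rule summable_comparison_test[where g="\<lambda>k. (wt R k * 16^k) * B\<^sup>2"])
    show "\<exists>N. \<forall>n\<ge>N. norm (wt R n * (a x n)\<^sup>2) \<le> wt R n * 16 ^ n * B\<^sup>2"
    proof (intro exI allI impI)
      fix n
      have "(a x n)\<^sup>2 \<le> (4^n * B)\<^sup>2" using a0[of x n] by (intro power_mono) auto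
      also have "\<dots> = 16^n * B\<^sup>2"
      proof -
        have "((4::real)^n)\<^sup>2 = (4^2)^n" by (metis power_mult mult.commute)
        then have "((4::real)^n)\<^sup>2 = 16^n" by simp
        then show ?thesis by (simp add: power_mult_distrib)
      qed
      finally show "norm (wt R n * (a x n)\<^sup>2) \<le> wt R n * 16 ^ n * B\<^sup>2"
        using wt_nonneg[OF R, of n] by (simp add: abs_mult mult.assoc mult_left_mono)
    qed
    show "summable (\<lambda>k. wt R k * 16 ^ k * B\<^sup>2)" using wt_summable by (rule summable_mult2)
  qed
  have sva: "summable (\<lambda>k. v k * (a x k)\<^sup>2)" for x
    by (rule summable_comparison_test[OF _ swa[of x]]) (auto simp: v_def wt_nonneg[OF R])
  have pt: "(Mop R g x)\<^sup>2 \<le> tw R N * (\<Sum>k. wt R k * (a x k)\<^sup>2)" if "x \<in> X" for x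
  proof -
    have "a x k = 0" if "k < N" for k
      unfolding a_def by (rule Aop_pow_local) (use loc[OF \<open>x \<in> X\<close>] that in auto)
    then have "Mop R g x = (\<Sum>k. v k * a x k)"
      unfolding Mop_def v_def a_def by (intro suminf_cong) auto
    then have "(Mop R g x)\<^sup>2 \<le> (\<Sum>k. v k) * (\<Sum>k. v k * (a x k)\<^sup>2)"
      using series_CS[OF v0 sv sva[of x]] by simp
    also have "\<dots> \<le> (\<Sum>k. v k) * (\<Sum>k. wt R k * (a x k)\<^sup>2)"
      by (intro mult_left_mono suminf_le sva swa suminf_nonneg sv v0)
         (auto simp: v_def wt_nonneg[OF R])
    finally show ?thesis unfolding tw_def v_def by simp
  qed
  have fin: "sum (\<lambda>x. (Mop R g x)\<^sup>2) F \<le> tw R N * exp (16*R) * G" if "finite F" "F \<subseteq> X" for F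
  proof -
    have "sum (\<lambda>x. (Mop R g x)\<^sup>2) F \<le> sum (\<lambda>x. tw R N * (\<Sum>k. wt R k * (a x k)\<^sup>2)) F"
      using pt that by (intro sum_mono) auto
    also have "\<dots> = tw R N * (\<Sum>k. \<Sum>x\<in>F. wt R k * (a x k)\<^sup>2)"
      by (simp add: sum_distrib_left suminf_sum[OF swa])
    also have "\<dots> \<le> tw R N * (\<Sum>k. wt R k * 16^k * G)"
    proof (intro mult_left_mono suminf_le tw_nonneg[OF R])
      fix k
      have ak: "(\<lambda>x. (a x k)\<^sup>2) summable_on UNIV" "infsum (\<lambda>x. (a x k)\<^sup>2) UNIV \<le> 16^k * G"
        using Aop_pow_l2[OF gs, of k] unfolding a_def G_def by auto
      have "(\<Sum>x\<in>F. (a x k)\<^sup>2) \<le> infsum (\<lambda>x. (a x k)\<^sup>2) UNIV"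
        by (rule sum_le_infsum_nonneg[OF ak(1) that(1)]) auto
      then have "(\<Sum>x\<in>F. (a x k)\<^sup>2) \<le> 16^k * G" using ak(2) by simp
      then show "(\<Sum>x\<in>F. wt R k * (a x k)\<^sup>2) \<le> wt R k * 16 ^ k * G"
        using wt_nonneg[OF R, of k] by (simp add: sum_distrib_left[symmetric] mult.assoc mult_left_mono)
      show "summable (\<lambda>k. \<Sum>x\<in>F. wt R k * (a x k)\<^sup>2)" by (intro summable_sum swa)
      show "summable (\<lambda>k. wt R k * 16 ^ k * G)" using wt_summable by (rule summable_mult2)
    qed
    also have "\<dots> = tw R N * exp (16*R) * G"
      using suminf_mult2[OF wt_summable[of R 16], of G] wt_suminf[of R 16]
      by (simp add: mult.commute mult.left_commute)
    finally show ?thesis .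
  qed
  show ?thesis unfolding G_def[symmetric]
    by (rule infsum_le_of_finite_sums_nonneg) (use fin in auto)
qed


lemma wt_mono: "0 \<le> a \<Longrightarrow> a \<le> b \<Longrightarrow> wt a k \<le> wt b k"
  unfolding wt_def by (intro divide_right_mono power_mono) auto

lemma dS_term_norm:
  "norm ((\<i> * complex_of_real r)^k / of_nat (fact k) * z) = wt \<bar>r\<bar> k * norm z"
  by (simp add: wt_def norm_mult norm_power norm_divide)

lemma dS_norm_summable:
  assumes "\<And>y. norm (f y) \<le> B" "\<bar>r\<bar> \<le> R"
  shows "summable (\<lambda>k. norm ((\<i> * complex_of_real r)^k / of_nat (fact k) * (dlap^^k) f x))"
proof (rule summable_comparison_test[OF _ Mop_summable[of R "\<lambda>y. norm (f y)" B x]])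
  show "\<exists>N. \<forall>n\<ge>N. norm (norm ((\<i> * complex_of_real r) ^ n / of_nat (fact n) * (dlap ^^ n) f x))
           \<le> wt R n * (Aop ^^ n) (\<lambda>y. norm (f y)) x"
  proof (intro exI allI impI)
    fix n
    have "wt \<bar>r\<bar> n * norm ((dlap ^^ n) f x) \<le> wt R n * (Aop ^^ n) (\<lambda>y. norm (f y)) x"
      by (intro mult_mono wt_mono dlap_pow_bound wt_nonneg) (use assms in auto)
    then show "norm (norm ((\<i> * complex_of_real r) ^ n / of_nat (fact n) * (dlap ^^ n) f x))
           \<le> wt R n * (Aop ^^ n) (\<lambda>y. norm (f y)) x"
      unfolding real_norm_def abs_norm_cancel dS_term_norm by (simp add: abs_mult wt_nonneg)
  qed
qed (use assms in \<open>auto intro: order_trans[OF abs_ge_zero]\<close>)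

lemma dS_summable:
  assumes "\<And>y. norm (f y) \<le> B"
  shows "summable (\<lambda>k. (\<i> * complex_of_real r)^k / of_nat (fact k) * (dlap^^k) f x)"
  using dS_norm_summable[of f B r "\<bar>r\<bar>" x] assms summable_norm_cancel by auto

lemma dS_bound:
  assumes "\<And>y. norm (f y) \<le> B" "\<bar>r\<bar> \<le> R"
  shows "norm (dS r f x) \<le> Mop R (\<lambda>y. norm (f y)) x"
proof -
  have R: "R \<ge> 0" using assms(2) by linarith
  have "norm (dS r f x) \<le> (\<Sum>k. norm ((\<i> * complex_of_real r)^k / of_nat (fact k) * (dlap^^k) f x))"
    unfolding dS_def by (rule summable_norm[OF dS_norm_summable[of f B r R x]]) (use assms in auto)
  also have "\<dots> \<le> Mop R (\<lambda>y. norm (f y)) x"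
    unfolding Mop_def
  proof (rule suminf_le[OF _ dS_norm_summable[of f B r R x] Mop_summable[of R "\<lambda>y. norm (f y)" B x]])
    fix n
    have "wt \<bar>r\<bar> n * norm ((dlap ^^ n) f x) \<le> wt R n * (Aop ^^ n) (\<lambda>y. norm (f y)) x"
      by (intro mult_mono wt_mono dlap_pow_bound wt_nonneg) (use assms R in auto)
    then show "norm ((\<i> * complex_of_real r) ^ n / of_nat (fact n) * (dlap ^^ n) f x)
           \<le> wt R n * (Aop ^^ n) (\<lambda>y. norm (f y)) x"
      by (simp only: dS_term_norm)
  qed (use assms R in auto)
  finally show ?thesis .
qed

lemma dS_add:
  assumes "\<And>y. norm (f y) \<le> B" "\<And>y. norm (g y) \<le> B'"
  shows "dS r (\<lambda>y. f y + g y) x = dS r f x + dS r g x"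
  unfolding dS_def dlap_pow_add distrib_left
  using suminf_add[OF dS_summable[of f B r x] dS_summable[of g B' r x]] assms
  by simp

lemma dS_scale:
  assumes "\<And>y. norm (f y) \<le> B"
  shows "dS r (\<lambda>y. c * f y) x = c * dS r f x"
  unfolding dS_def dlap_pow_scale
  using suminf_mult[OF dS_summable[of f B r x], of c] assms
  by (simp add: algebra_simps)

lemma dS_measurable:
  assumes "\<And>y. norm (f y) \<le> B"
  shows "(\<lambda>r. dS r f x) \<in> borel_measurable borel"
proof (rule borel_measurable_LIMSEQ_metric)
  fix n
  show "(\<lambda>r. \<Sum>k<n. (\<i> * complex_of_real r)^k / of_nat (fact k) * (dlap^^k) f x) \<in> borel_measurable borel"
    by measurable
next
  fix r :: real
  show "(\<lambda>n. \<Sum>k<n. (\<i> * complex_of_real r)^k / of_nat (fact k) * (dlap^^k) f x) \<longlonglongrightarrow> dS r f x"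
    unfolding dS_def by (rule summable_LIMSEQ[OF dS_summable[of f B]]) (rule assms)
qed

lemma in_l2_bound:
  assumes "in_l2 f"
  shows "norm (f y) \<le> sqrt (l2_norm_sq f)"
proof -
  have "(norm (f y))\<^sup>2 \<le> l2_norm_sq f"
    using l2_pointwise[of "\<lambda>x. norm (f x)" y] assms unfolding in_l2_def l2_norm_sq_def by simp
  then show ?thesis using real_le_rsqrt by blast
qed

lemma l2_norm_sq_nonneg: "l2_norm_sq f \<ge> 0"
  unfolding l2_norm_sq_def by (rule infsum_nonneg) simp


lemma dlap_pow_const_local:
  assumes "\<And>z. \<bar>z - x\<bar> \<le> int (Suc k) \<Longrightarrow> f z = c"
  shows "(dlap^^Suc k) f x = 0"
  using assms
proof (induction k arbitrary: x)
  case 0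
  have "f (x+1) = c" "f (x-1) = c" "f x = c" by (rule 0; auto)+
  then show ?case by (simp add: dlap_def)
next
  case (Suc k)
  have "(dlap^^Suc k) f (x+1) = 0" by (rule Suc.IH) (rule Suc.prems, auto)
  moreover have "(dlap^^Suc k) f (x-1) = 0" by (rule Suc.IH) (rule Suc.prems, auto)
  moreover have "(dlap^^Suc k) f x = 0" by (rule Suc.IH) (rule Suc.prems, auto)
  ultimately show ?case by (simp only: dlap_pow_Suc) simp
qed

lemma l2_scale:
  assumes "in_l2 f"
  shows "in_l2 (\<lambda>x. c * f x) \<and> l2_norm_sq (\<lambda>x. c * f x) = (norm c)\<^sup>2 * l2_norm_sq f"
proof -
  have e: "(\<lambda>x. (norm (c * f x))\<^sup>2) = (\<lambda>x. (norm c)\<^sup>2 * (norm (f x))\<^sup>2)"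
    by (simp add: norm_mult power_mult_distrib)
  show ?thesis using assms unfolding in_l2_def l2_norm_sq_def e
    by (simp add: summable_on_cmult_right infsum_cmult_right)
qed

locale qsetup =
  fixes \<mu> :: "real measure" and R0 :: real
  assumes sets_mu: "sets \<mu> = sets borel"
    and fin: "emeasure \<mu> UNIV < \<infinity>"
    and R0: "R0 \<ge> 0"
    and supp: "AE r in \<mu>. \<bar>r\<bar> \<le> R0"
begin

lemma space_mu: "space \<mu> = UNIV"
  using sets_eq_imp_space_eq[OF sets_mu] by simp

sublocale finite_measure \<mu>
  by (rule finite_measureI) (use fin space_mu in auto)

definition Mf where "Mf f x = Mop R0 (\<lambda>y. norm (f y)) x"
definition E0 where "E0 = exp R0 * exp (16*R0)"
definition qv where "qv f x = (\<integral>r. (norm (dS r f x))^4 \<partial>\<mu>)"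
definition Qr where "Qr f = (\<Sum>\<^sub>\<infinity>x. qv f x)"
definition mu where "mu = measure \<mu> UNIV"

lemma E0_pos: "E0 > 0" by (simp add: E0_def)
lemma mu_nonneg: "mu \<ge> 0" by (simp add: mu_def)

lemma dS_meas:
  assumes "in_l2 f"
  shows "(\<lambda>r. dS r f x) \<in> borel_measurable \<mu>"
  using dS_measurable[of f "sqrt (l2_norm_sq f)" x] in_l2_bound[OF assms]
    measurable_cong_sets[OF sets_mu refl]
  by auto

lemma Mf_nonneg: "in_l2 f \<Longrightarrow> 0 \<le> Mf f x"
  unfolding Mf_def using Mop_bound[of R0 "\<lambda>y. norm (f y)" "sqrt (l2_norm_sq f)" x] R0 in_l2_bound
  by auto

lemma Mf_l2:
  assumes "in_l2 f"
  shows "(\<lambda>x. (Mf f x)\<^sup>2) summable_on UNIV \<and> (\<Sum>\<^sub>\<infinity>x. (Mf f x)\<^sup>2) \<le> E0 * l2_norm_sq f"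
  using Mop_l2_local[of R0 "\<lambda>y. norm (f y)" UNIV 0] R0 assms
  unfolding Mf_def E0_def in_l2_def l2_norm_sq_def tw_0 by auto

lemma Mf_pt:
  assumes "in_l2 f"
  shows "(Mf f x)\<^sup>2 \<le> E0 * l2_norm_sq f"
  using l2_pointwise[of "Mf f" x] Mf_l2[OF assms] by auto

lemma dS_le_Mf:
  assumes "in_l2 f"
  shows "AE r in \<mu>. norm (dS r f x) \<le> Mf f x"
  using supp
proof eventually_elim
  case (elim r)
  show ?case unfolding Mf_def
    by (rule dS_bound[of f "sqrt (l2_norm_sq f)"]) (use in_l2_bound[OF assms] elim in auto)
qed

lemma qv_int:
  assumes "in_l2 f"
  shows "integrable \<mu> (\<lambda>r. (norm (dS r f x))^4)"
proof (rule integrable_const_bound[where B="(Mf f x)^4"])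
  show "AE r in \<mu>. norm ((norm (dS r f x))^4) \<le> (Mf f x)^4"
    using dS_le_Mf[OF assms, of x] by eventually_elim (auto intro!: power_mono)
  show "(\<lambda>r. (norm (dS r f x))^4) \<in> borel_measurable \<mu>"
    using dS_meas[OF assms] by measurable
qed

lemma qv_bounds:
  assumes "in_l2 f"
  shows "0 \<le> qv f x \<and> qv f x \<le> mu * (Mf f x)^4"
proof
  show "0 \<le> qv f x" unfolding qv_def by (rule integral_nonneg_AE) auto
  have "qv f x \<le> (\<integral>r. (Mf f x)^4 \<partial>\<mu>)" unfolding qv_def
    by (rule integral_mono_AE[OF qv_int[OF assms]]) 
       (use dS_le_Mf[OF assms, of x] in \<open>auto elim!: eventually_mono intro!: power_mono\<close>)
  then show "qv f x \<le> mu * (Mf f x)^4" by (simp add: mu_def space_mu)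
qed

lemma qv_sq_bound:
  assumes "in_l2 f"
  shows "qv f x \<le> (mu * E0 * l2_norm_sq f) * (Mf f x)\<^sup>2"
proof -
  have "(Mf f x)^4 = (Mf f x)\<^sup>2 * (Mf f x)\<^sup>2" by (simp add: power2_eq_square power4_eq_xxxx)
  also have "\<dots> \<le> (E0 * l2_norm_sq f) * (Mf f x)\<^sup>2"
    using Mf_pt[OF assms, of x] by (intro mult_right_mono) auto
  finally have "(Mf f x)^4 \<le> (E0 * l2_norm_sq f) * (Mf f x)\<^sup>2" .
  then have "mu * (Mf f x)^4 \<le> mu * ((E0 * l2_norm_sq f) * (Mf f x)\<^sup>2)"
    using mu_nonneg by (rule mult_left_mono)
  then show ?thesis using qv_bounds[OF assms, of x] by (simp add: mult.assoc)
qed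

lemma Qr_summable:
  assumes "in_l2 f"
  shows "(\<lambda>x. qv f x) summable_on UNIV"
  by (rule summable_on_comparison_test[where f="\<lambda>x. (mu * E0 * l2_norm_sq f) * (Mf f x)\<^sup>2"])
     (use Mf_l2[OF assms] qv_sq_bound[OF assms] qv_bounds[OF assms] in \<open>auto intro: summable_on_cmult_right\<close>)

lemma Qr_bounds:
  assumes "in_l2 f"
  shows "0 \<le> Qr f \<and> Qr f \<le> mu * (E0 * l2_norm_sq f)\<^sup>2"
proof
  show "0 \<le> Qr f" unfolding Qr_def by (rule infsum_nonneg) (use qv_bounds[OF assms] in auto)
  have s2: "(\<lambda>x. (mu * E0 * l2_norm_sq f) * (Mf f x)\<^sup>2) summable_on UNIV"
    using Mf_l2[OF assms] by (auto intro: summable_on_cmult_right)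
  have "Qr f \<le> (\<Sum>\<^sub>\<infinity>x. (mu * E0 * l2_norm_sq f) * (Mf f x)\<^sup>2)" unfolding Qr_def
    by (rule infsum_mono[OF Qr_summable[OF assms] s2]) (use qv_sq_bound[OF assms] in auto)
  also have "\<dots> = (mu * E0 * l2_norm_sq f) * (\<Sum>\<^sub>\<infinity>x. (Mf f x)\<^sup>2)"
    using Mf_l2[OF assms] by (simp add: infsum_cmult_right)
  also have "\<dots> \<le> (mu * E0 * l2_norm_sq f) * (E0 * l2_norm_sq f)"
    using Mf_l2[OF assms] mu_nonneg E0_pos l2_norm_sq_nonneg[of f] by (intro mult_left_mono) auto
  finally show "Qr f \<le> mu * (E0 * l2_norm_sq f)\<^sup>2" by (simp add: power2_eq_square mult_ac)
qed

lemma Qd_eq: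
  assumes "in_l2 f"
  shows "Qd \<mu> f f f f = complex_of_real (Qr f)"
proof -
  have pt: "cnj z * z * cnj z * z = complex_of_real ((norm z)^4)" for z :: complex
  proof -
    have "cnj z * z = complex_of_real ((norm z)\<^sup>2)" using complex_norm_square[of z] by (simp only: mult.commute)
    then have "cnj z * z * cnj z * z = complex_of_real ((norm z)\<^sup>2) * complex_of_real ((norm z)\<^sup>2)"
      by (metis mult.assoc)
    then show ?thesis by (simp add: power4_eq_xxxx power2_eq_square)
  qed
  have "Qd \<mu> f f f f = (\<Sum>\<^sub>\<infinity>x. complex_of_real (qv f x))"
    unfolding Qd_def qv_def pt integral_complex_of_real ..
  also have "\<dots> = complex_of_real (Qr f)"
    unfolding Qr_def using has_sum_of_real[OF has_sum_infsum[OF Qr_summable[OF assms]]]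
    by (rule infsumI)
  finally show ?thesis .
qed

lemma Qr_scale:
  assumes "in_l2 f"
  shows "Qr (\<lambda>y. c * f y) = (norm c)^4 * Qr f"
proof -
  have "qv (\<lambda>y. c * f y) x = (norm c)^4 * qv f x" for x
  proof -
    have "dS r (\<lambda>y. c * f y) x = c * dS r f x" for r
      by (rule dS_scale[of f "sqrt (l2_norm_sq f)"]) (use in_l2_bound[OF assms] in auto)
    then have "(\<lambda>r. (norm (dS r (\<lambda>y. c * f y) x))^4) = (\<lambda>r. (norm c)^4 * (norm (dS r f x))^4)"
      by (simp add: norm_mult power_mult_distrib)
    then show ?thesis unfolding qv_def by simp
  qed
  then have "qv (\<lambda>y. c * f y) = (\<lambda>x. (norm c)^4 * qv f x)" by auto
  then show ?thesis unfolding Qr_def by (simp add: infsum_cmult_right')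
qed

end


lemma wt_4: "wt (4*R) k = wt R k * 4^k"
  by (simp add: wt_def power_mult_distrib)

context qsetup
begin

lemma Pd_set_eq:
  "{Re (Qd \<mu> f f f f) | f. in_l2 f \<and> l2_norm_sq f = lam} = {Qr f | f. in_l2 f \<and> l2_norm_sq f = lam}"
  using Qd_eq by force

lemma Pd_bdd: "bdd_above {Re (Qd \<mu> f f f f) | f. in_l2 f \<and> l2_norm_sq f = lam}"
  unfolding Pd_set_eq
  by (rule bdd_aboveI[where M="mu * (E0 * lam)\<^sup>2"]) (use Qr_bounds in auto)

lemma Qr_le_Pd:
  assumes "in_l2 f" "l2_norm_sq f = lam"
  shows "Qr f \<le> Pd \<mu> lam"
  unfolding Pd_def
  by (rule cSup_upper[OF _ Pd_bdd]) (use assms Qd_eq in force)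

lemma mu_pos:
  assumes "emeasure \<mu> UNIV \<noteq> 0"
  shows "mu > 0"
proof -
  have "mu \<noteq> 0" using assms emeasure_eq_measure[of UNIV] unfolding mu_def by auto
  then show ?thesis using mu_nonneg by simp
qed

lemma exists_pos_test:
  assumes "emeasure \<mu> UNIV \<noteq> 0"
  shows "\<exists>f. in_l2 f \<and> l2_norm_sq f > 0 \<and> Qr f > 0"
proof -
  obtain N where N: "\<forall>n\<ge>N. norm (tw (4*R0) n - 0) < 1/2"
    using LIMSEQ_D[OF tw_lim[of "4*R0"], of "1/2"] by auto
  then have "norm (tw (4*R0) (Suc N) - 0) < 1/2" by simp
  then have N': "tw (4*R0) (Suc N) < 1/2" by simp
  define f :: "int \<Rightarrow> complex" where "f x = (if \<bar>x\<bar> \<le> int N then 1 else 0)" for x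
  have f1: "norm (f y) \<le> 1" for y by (simp add: f_def)
  have fin: "finite {-int N..int N}" by simp
  have l2: "in_l2 f" unfolding in_l2_def
    by (subst summable_on_cong_neutral[where T="{-int N..int N}" and g="\<lambda>x. (norm (f x))\<^sup>2"])
       (auto simp: f_def)
  have "(norm (f 0))\<^sup>2 \<le> l2_norm_sq f"
    using l2_pointwise[of "\<lambda>x. norm (f x)" 0] l2 unfolding in_l2_def l2_norm_sq_def by simp
  then have fpos: "l2_norm_sq f > 0" by (simp add: f_def)
  define t where "t r k = (\<i> * complex_of_real r)^k / of_nat (fact k) * (dlap^^k) f 0" for r k
  have big: "norm (dS r f 0) \<ge> 1/2" if r: "\<bar>r\<bar> \<le> R0" for r
  proof -
    have tn: "norm (t r k) \<le> wt (4*R0) k" for k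
    proof -
      have "norm (t r k) = wt \<bar>r\<bar> k * norm ((dlap^^k) f 0)" unfolding t_def by (rule dS_term_norm)
      also have "\<dots> \<le> wt R0 k * (4^k * 1)"
      proof (intro mult_mono wt_mono)
        have "norm ((dlap^^k) f 0) \<le> (Aop^^k) (\<lambda>y. norm (f y)) 0" by (rule dlap_pow_bound)
        also have "\<dots> \<le> 4^k * 1" using Aop_pow_bound[of "\<lambda>y. norm (f y)" 1 k 0] f1 by auto
        finally show "norm ((dlap^^k) f 0) \<le> 4^k * 1" .
      qed (use r R0 wt_nonneg in auto)
      finally show ?thesis by (simp add: wt_4)
    qed
    define u where "u k = (if N < k then t r k else 0)" for k
    have tk: "t r k = (if k = 0 then 1 else 0) + u k" for k
    proof (cases "k = 0")
      case True then show ?thesis by (simp add: t_def u_def f_def)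
    next
      case False
      show ?thesis
      proof (cases "N < k")
        case True then show ?thesis using False by (simp add: u_def)
      next
        case nk: False
        obtain k' where k': "k = Suc k'" using False not0_implies_Suc by blast
        have "(dlap^^Suc k') f 0 = 0"
          by (rule dlap_pow_const_local[where c=1]) (use nk k' in \<open>auto simp: f_def\<close>)
        then show ?thesis using False nk k' by (simp add: t_def u_def)
      qed
    qed
    have su_norm: "summable (\<lambda>k. norm (u k))"
      by (rule summable_comparison_test[OF _ tw_summable[of "4*R0" "Suc N"]])
         (use tn R0 in \<open>auto simp: u_def\<close>)
    have su: "summable u" using su_norm summable_norm_cancel by blast
    have "dS r f 0 = (\<Sum>k. t r k)" unfolding dS_def t_def by simp
    also have "\<dots> = 1 + (\<Sum>k. u k)"
    proof -
      have "(\<lambda>k. (if k = 0 then 1 else 0) + u k) sums (1 + suminf u)"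
        using sums_add[OF sums_single[of 0 "\<lambda>_. 1::complex"] summable_sums[OF su]] by simp
      then show ?thesis unfolding tk by (rule sums_unique[symmetric])
    qed
    finally have e: "dS r f 0 = 1 + suminf u" .
    have "norm (suminf u) \<le> (\<Sum>k. norm (u k))" by (rule summable_norm[OF su_norm])
    also have "\<dots> \<le> tw (4*R0) (Suc N)" unfolding tw_def
      by (rule suminf_le[OF _ su_norm tw_summable]) (use tn R0 in \<open>auto simp: u_def\<close>)
    finally have "norm (suminf u) < 1/2" using N' by simp
    moreover have "norm (1::complex) - norm (suminf u) \<le> norm (1 + suminf u)" by (rule norm_diff_ineq)
    ultimately show ?thesis unfolding e by simp
  qed
  have q0: "qv f 0 \<ge> mu / 16"
  proof -
    have "(\<integral>r. (1/16::real) \<partial>\<mu>) \<le> qv f 0" unfolding qv_def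
    proof (rule integral_mono_AE[OF _ qv_int[OF l2]])
      show "AE r in \<mu>. 1/16 \<le> (norm (dS r f 0))^4"
        using supp
      proof eventually_elim
        case (elim r)
        have h: "1/2 \<le> norm (dS r f 0)" by (rule big[OF elim])
        have "(1/2::real)^4 \<le> (norm (dS r f 0))^4" by (rule power_mono[OF h]) simp
        moreover have "(1/2::real)^4 = 1/16" by (simp add: power_divide)
        ultimately show ?case by linarith
      qed
    qed simp
    then show ?thesis by (simp add: mu_def space_mu)
  qed
  have "qv f 0 \<le> Qr f" unfolding Qr_def
    by (rule single_le_infsum_nonneg[OF Qr_summable[OF l2]]) (use qv_bounds[OF l2] in auto)
  then have "Qr f > 0" using q0 mu_pos[OF assms] by simp
  then show ?thesis using l2 fpos by blast
qed

lemma Pd_pos: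
  assumes "emeasure \<mu> UNIV \<noteq> 0" "lam > 0"
  shows "Pd \<mu> lam > 0"
proof -
  obtain f where f: "in_l2 f" "l2_norm_sq f > 0" "Qr f > 0"
    using exists_pos_test[OF assms(1)] by blast
  define c where "c = complex_of_real (sqrt (lam / l2_norm_sq f))"
  have nc: "(norm c)\<^sup>2 = lam / l2_norm_sq f" unfolding c_def using assms f by simp
  have g: "in_l2 (\<lambda>x. c * f x)" "l2_norm_sq (\<lambda>x. c * f x) = lam"
    using l2_scale[OF f(1), of c] nc f by auto
  have "norm c > 0" unfolding c_def using assms f by simp
  then have "Qr (\<lambda>x. c * f x) > 0" using Qr_scale[OF f(1), of c] f by simp
  then show ?thesis using Qr_le_Pd[OF g] by linarith
qed

lemma Qr_le_Pd_scaled: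
  assumes "emeasure \<mu> UNIV \<noteq> 0" "lam > 0" "in_l2 g"
  shows "Qr g \<le> Pd \<mu> lam * (l2_norm_sq g / lam)\<^sup>2"
proof (cases "l2_norm_sq g = 0")
  case True
  then have "Qr g \<le> 0" using Qr_bounds[OF assms(3)] by simp
  then show ?thesis using True by simp
next
  case False
  then have gp: "l2_norm_sq g > 0" using l2_norm_sq_nonneg[of g] by simp
  define c where "c = complex_of_real (sqrt (lam / l2_norm_sq g))"
  have nc: "(norm c)\<^sup>2 = lam / l2_norm_sq g" unfolding c_def using assms gp by simp
  have h: "in_l2 (\<lambda>x. c * g x)" "l2_norm_sq (\<lambda>x. c * g x) = lam"
    using l2_scale[OF assms(3), of c] nc gp by auto
  have "(norm c)^4 * Qr g \<le> Pd \<mu> lam" using Qr_le_Pd[OF h] Qr_scale[OF assms(3), of c] by simp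
  moreover have "(norm c)^4 = (lam / l2_norm_sq g)\<^sup>2"
  proof -
    have "(norm c)^4 = ((norm c)\<^sup>2)\<^sup>2" by (simp add: power_mult[symmetric])
    then show ?thesis using nc by simp
  qed
  ultimately have *: "(lam / l2_norm_sq g)\<^sup>2 * Qr g \<le> Pd \<mu> lam" by simp
  have "(l2_norm_sq g / lam)\<^sup>2 * ((lam / l2_norm_sq g)\<^sup>2 * Qr g) \<le> (l2_norm_sq g / lam)\<^sup>2 * Pd \<mu> lam"
    using * by (rule mult_left_mono) simp
  moreover have "(l2_norm_sq g / lam)\<^sup>2 * ((lam / l2_norm_sq g)\<^sup>2 * Qr g) = Qr g"
  proof -
    have "(l2_norm_sq g / lam) * (lam / l2_norm_sq g) = 1" using gp assms(2) by simp
    then have "(l2_norm_sq g / lam)\<^sup>2 * (lam / l2_norm_sq g)\<^sup>2 = 1"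
      by (metis power_mult_distrib power_one)
    then show ?thesis by (metis mult.assoc mult_1)
  qed
  ultimately show ?thesis by (metis mult.commute)
qed

end


lemma pow4_diff_le:
  fixes a c :: real
  assumes "0 \<le> a" "a \<le> c"
  shows "c^4 \<le> a^4 + 4 * (c - a) * c^3"
proof -
  have e: "c^4 - a^4 = (c-a)*(c^3+c^2*a+c*a^2+a^3)" by algebra
  have "c^2*a \<le> c^3" using assms by (simp add: power2_eq_square power3_eq_cube mult_left_mono)
  moreover have "c*a^2 \<le> c^3"
  proof -
    have "a^2 \<le> c^2" using assms by (intro power_mono) auto
    then have "c*a^2 \<le> c*c^2" using assms by (intro mult_left_mono) auto
    then show ?thesis by (simp add: power2_eq_square power3_eq_cube)
  qed
  moreover have "a^3 \<le> c^3" using assms by (intro power_mono) auto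
  ultimately have "c^3+c^2*a+c*a^2+a^3 \<le> 4*c^3" by linarith
  then have "(c-a)*(c^3+c^2*a+c*a^2+a^3) \<le> (c-a)*(4*c^3)" using assms by (intro mult_left_mono) auto
  then show ?thesis using e by (simp add: algebra_simps)
qed

lemma quartic_split:
  fixes u v w :: complex and U V W Z T :: real
  assumes "norm u \<le> U" "norm v \<le> V" "norm w \<le> W" "U + V + W \<le> T"
    and "norm u \<le> Z \<or> norm w \<le> Z"
  shows "(norm (u+v+w))^4 \<le> (norm u)^4 + (norm w)^4 + 4 * (V + Z) * T^3"
proof -
  define q where "q = norm (u + w)"
  define b where "b = norm v"
  have q0: "0 \<le> q" "0 \<le> b" by (auto simp: q_def b_def)
  have quw: "q \<le> norm u + norm w" unfolding q_def by (rule norm_triangle_ineq)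
  have p: "norm (u+v+w) \<le> q + b" unfolding q_def b_def
    by (metis add.commute add.left_commute norm_triangle_ineq)
  have T1: "q + b \<le> T" using quw assms(1-4) unfolding b_def by linarith
  have "(norm (u+v+w))^4 \<le> (q+b)^4" using p by (intro power_mono) auto
  also have "\<dots> \<le> q^4 + 4 * b * (q+b)^3"
    using pow4_diff_le[of q "q+b"] q0 by simp
  also have "\<dots> \<le> q^4 + 4 * V * T^3"
  proof -
    have "(q+b)^3 \<le> T^3" using T1 q0 by (intro power_mono) auto
    then have "b * (q+b)^3 \<le> V * T^3" using assms(2) q0 unfolding b_def
      by (intro mult_mono) (auto intro: order_trans[OF norm_ge_zero])
    then show ?thesis by simp
  qed
  also have "q^4 \<le> (norm u)^4 + (norm w)^4 + 4 * Z * T^3"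
  proof -
    define mm where "mm = min (norm u) (norm w)"
    define MM where "MM = max (norm u) (norm w)"
    have s: "norm u + norm w = MM + mm" unfolding mm_def MM_def by auto
    have mmZ: "mm \<le> Z" using assms(5) unfolding mm_def by auto
    have mm0: "0 \<le> mm" unfolding mm_def by simp
    have "q^4 \<le> (MM + mm)^4" using quw q0 s by (intro power_mono) auto
    also have "\<dots> \<le> MM^4 + 4 * mm * (MM+mm)^3"
      using pow4_diff_le[of MM "MM+mm"] mm0 unfolding MM_def by (simp add: le_max_iff_disj)
    also have "MM^4 \<le> (norm u)^4 + (norm w)^4" unfolding MM_def by (simp add: max_def)
    also have "(MM+mm)^3 \<le> T^3"
    proof (rule power_mono)
      show "MM + mm \<le> T" using s assms(1-4) norm_ge_zero[of v] by linarith
      show "0 \<le> MM + mm" using mm0 by (simp add: MM_def le_max_iff_disj)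
    qed
    then have "4 * mm * (MM+mm)^3 \<le> 4 * Z * T^3" using mmZ mm0
      by (intro mult_mono) (auto simp: MM_def le_max_iff_disj)
    finally show ?thesis by simp
  qed
  finally show ?thesis by (simp add: algebra_simps)
qed


definition restr :: "int set \<Rightarrow> (int \<Rightarrow> complex) \<Rightarrow> int \<Rightarrow> complex" where
  "restr A f x = (if x \<in> A then f x else 0)"

lemma restr_l2:
  assumes "in_l2 f"
  shows "in_l2 (restr A f) \<and> l2_norm_sq (restr A f) = (\<Sum>\<^sub>\<infinity>x\<in>A. (norm (f x))\<^sup>2)
         \<and> (\<lambda>x. (norm (f x))\<^sup>2) summable_on A"
proof -
  have sA: "(\<lambda>x. (norm (f x))\<^sup>2) summable_on A"
    using assms unfolding in_l2_def by (rule summable_on_subset) auto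
  have "(\<lambda>x. (norm (restr A f x))\<^sup>2) summable_on UNIV \<longleftrightarrow> (\<lambda>x. (norm (f x))\<^sup>2) summable_on A"
    by (rule summable_on_cong_neutral) (auto simp: restr_def)
  moreover have "infsum (\<lambda>x. (norm (restr A f x))\<^sup>2) UNIV = infsum (\<lambda>x. (norm (f x))\<^sup>2) A"
    by (rule infsum_cong_neutral) (auto simp: restr_def)
  ultimately show ?thesis using sA unfolding in_l2_def l2_norm_sq_def by auto
qed

lemma restr_norm: "norm (restr A f y) \<le> norm (f y)"
  by (simp add: restr_def)

context qsetup
begin

lemma qv_split_pt:
  assumes f: "in_l2 f" and g: "in_l2 g" and m: "in_l2 m" and h: "in_l2 h"
    and fe: "\<And>y. f y = g y + (m y + h y)"
    and nf: "\<And>y. norm (f y) = norm (g y) + (norm (m y) + norm (h y))"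
    and Z: "\<And>r. \<bar>r\<bar> \<le> R0 \<Longrightarrow> norm (dS r g x) \<le> Z \<or> norm (dS r h x) \<le> Z"
  shows "qv f x \<le> qv g x + qv h x + mu * (4 * (Mf m x + Z) * (Mf f x)^3)"
proof -
  define B where "B = sqrt (l2_norm_sq f)"
  have bf: "norm (f y) \<le> B" for y unfolding B_def by (rule in_l2_bound[OF f])
  have bg: "norm (g y) \<le> B" for y using bf[of y] nf[of y] by (smt (verit) norm_ge_zero)
  have bm: "norm (m y) \<le> B" for y using bf[of y] nf[of y] by (smt (verit) norm_ge_zero)
  have bh: "norm (h y) \<le> B" for y using bf[of y] nf[of y] by (smt (verit) norm_ge_zero)
  have bmh: "norm (m y + h y) \<le> 2*B" for y by (rule norm_triangle_le) (use bm[of y] bh[of y] in linarith)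
  have dSe: "dS r f x = dS r g x + dS r m x + dS r h x" for r
  proof -
    have "f = (\<lambda>y. g y + (m y + h y))" using fe by auto
    then have "dS r f x = dS r g x + dS r (\<lambda>y. m y + h y) x"
      using dS_add[of g B "\<lambda>y. m y + h y" "2*B" r x] bg bmh by simp
    also have "dS r (\<lambda>y. m y + h y) x = dS r m x + dS r h x"
      using dS_add[of m B h B r x] bm bh by simp
    finally show ?thesis by simp
  qed
  have Te: "Mf f x = Mf g x + Mf m x + Mf h x"
  proof -
    have "(\<lambda>y. norm (f y)) = (\<lambda>y. norm (g y) + (norm (m y) + norm (h y)))" using nf by auto
    then have "Mf f x = Mop R0 (\<lambda>y. norm (g y) + (norm (m y) + norm (h y))) x" unfolding Mf_def by simp
    also have "\<dots> = Mf g x + Mop R0 (\<lambda>y. norm (m y) + norm (h y)) x"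
      unfolding Mf_def using bg bm bh R0
      by (intro Mop_add[where B=B and B'="2*B"]) (auto intro: add_mono[of _ B _ B, simplified])
    also have "Mop R0 (\<lambda>y. norm (m y) + norm (h y)) x = Mf m x + Mf h x"
      unfolding Mf_def using bm bh R0 by (intro Mop_add[where B=B and B'=B]) auto
    finally show ?thesis by simp
  qed
  have AE: "AE r in \<mu>. (norm (dS r f x))^4 \<le> (norm (dS r g x))^4 + (norm (dS r h x))^4 + 4 * (Mf m x + Z) * (Mf f x)^3"
    using supp dS_le_Mf[OF g, of x] dS_le_Mf[OF m, of x] dS_le_Mf[OF h, of x]
  proof eventually_elim
    case (elim r)
    show ?case unfolding dSe
      by (rule quartic_split[where U="Mf g x" and V="Mf m x" and W="Mf h x"])
         (use elim Z[OF elim(1)] Te in auto)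
  qed
  have i1: "integrable \<mu> (\<lambda>r. (norm (dS r g x))^4 + (norm (dS r h x))^4)"
    using qv_int[OF g, of x] qv_int[OF h, of x] by (rule Bochner_Integration.integrable_add)
  have i2: "integrable \<mu> (\<lambda>r. (norm (dS r g x))^4 + (norm (dS r h x))^4 + 4 * (Mf m x + Z) * (Mf f x)^3)"
    using i1 integrable_const by (rule Bochner_Integration.integrable_add)
  have "qv f x \<le> (\<integral>r. (norm (dS r g x))^4 + (norm (dS r h x))^4 + 4 * (Mf m x + Z) * (Mf f x)^3 \<partial>\<mu>)"
    unfolding qv_def
    by (rule integral_mono_AE[OF qv_int[OF f] i2 AE])
  also have "\<dots> = qv g x + qv h x + mu * (4 * (Mf m x + Z) * (Mf f x)^3)"
    unfolding qv_def
    by (simp add: Bochner_Integration.integral_add[OF i1 integrable_const]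
        Bochner_Integration.integral_add[OF qv_int[OF g] qv_int[OF h]] mu_def space_mu)
  finally show ?thesis .
qed

end


lemma summable_on_divide_r:
  fixes f :: "'a \<Rightarrow> real"
  shows "f summable_on A \<Longrightarrow> (\<lambda>x. f x / c) summable_on A"
  using summable_on_cmult_left[of f A "inverse c"] by (simp add: divide_inverse)

lemma infsum_divide_r:
  fixes f :: "'a \<Rightarrow> real"
  shows "infsum (\<lambda>x. f x / c) A = infsum f A / c"
  using infsum_cmult_left'[of f "inverse c" A] by (simp add: divide_inverse)

lemma amgm_s:
  fixes a b s :: real
  assumes "s > 0"
  shows "a * b \<le> a\<^sup>2 / (2 * s) + s * b\<^sup>2 / 2"
proof -
  have "0 \<le> (a - s * b)\<^sup>2" by simp
  then have "2 * s * (a * b) \<le> a\<^sup>2 + s\<^sup>2 * b\<^sup>2" by (simp add: power2_diff power_mult_distrib algebra_simps)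
  then have "a*b \<le> (a\<^sup>2 + s\<^sup>2 * b\<^sup>2) / (2 * s)" using assms by (simp add: field_simps)
  also have "\<dots> = a\<^sup>2 / (2 * s) + s * b\<^sup>2 / 2" using assms by (simp add: field_simps power2_eq_square)
  finally show ?thesis .
qed

context qsetup
begin

lemma split_estimate:
  assumes f: "in_l2 f" and NL: "2*N \<le> L" and s: "s > 0"
  shows "Qr f \<le> Qr (restr {x. x < c} f) + Qr (restr {x. c + int L \<le> x} f)
     + 4 * mu * (E0 * l2_norm_sq f) * ((E0 * l2_norm_sq (restr {x. c \<le> x \<and> x < c + int L} f)
         + tw R0 N * exp (16*R0) * l2_norm_sq f) / s + s * (E0 * l2_norm_sq f) / 2)"
proof -
  define G where "G = {x. x < c}"
  define Mi where "Mi = {x. c \<le> x \<and> x < c + int L}"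
  define H where "H = {x. c + int L \<le> x}"
  define g where "g = restr G f"
  define m where "m = restr Mi f"
  define h where "h = restr H f"
  define lam where "lam = l2_norm_sq f"
  define K where "K = E0 * lam"
  have lam0: "lam \<ge> 0" unfolding lam_def by (rule l2_norm_sq_nonneg)
  have K0: "K \<ge> 0" unfolding K_def using E0_pos lam0 by simp
  have rg: "in_l2 g" "l2_norm_sq g = (\<Sum>\<^sub>\<infinity>x\<in>G. (norm (f x))\<^sup>2)" "(\<lambda>x. (norm (f x))\<^sup>2) summable_on G"
    using restr_l2[OF f, of G] unfolding g_def by auto
  have rm: "in_l2 m" using restr_l2[OF f, of Mi] unfolding m_def by auto
  have rh: "in_l2 h" "l2_norm_sq h = (\<Sum>\<^sub>\<infinity>x\<in>H. (norm (f x))\<^sup>2)" "(\<lambda>x. (norm (f x))\<^sup>2) summable_on H"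
    using restr_l2[OF f, of H] unfolding h_def by auto
  have gh: "l2_norm_sq g + l2_norm_sq h \<le> lam"
  proof -
    have "l2_norm_sq g + l2_norm_sq h = (\<Sum>\<^sub>\<infinity>x\<in>G \<union> H. (norm (f x))\<^sup>2)"
      unfolding rg(2) rh(2) using rg(3) rh(3)
      by (rule infsum_Un_disjoint[symmetric]) (auto simp: G_def H_def)
    also have "\<dots> \<le> lam" unfolding lam_def l2_norm_sq_def
      by (rule infsum_mono_neutral) (use f rg(3) rh(3) in \<open>auto simp: in_l2_def intro: summable_on_union\<close>)
    finally show ?thesis .
  qed
  have fe: "f y = g y + (m y + h y)" for y
    unfolding g_def m_def h_def restr_def G_def Mi_def H_def by auto
  have nf: "norm (f y) = norm (g y) + (norm (m y) + norm (h y))" for y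
    unfolding g_def m_def h_def restr_def G_def Mi_def H_def by auto
  define Z where "Z x = (if x < c + int N then Mf h x else Mf g x)" for x
  define D where "D x = 4 * (Mf m x + Z x) * (Mf f x)^3" for x
  have qpt: "qv f x \<le> qv g x + qv h x + mu * D x" for x
    unfolding D_def
  proof (rule qv_split_pt[OF f rg(1) rm rh(1) fe nf])
    fix r :: real assume r: "\<bar>r\<bar> \<le> R0"
    show "norm (dS r g x) \<le> Z x \<or> norm (dS r h x) \<le> Z x"
    proof (cases "x < c + int N")
      case True
      have "norm (dS r h x) \<le> Z x" unfolding Z_def Mf_def using True
        by (auto intro!: dS_bound[of h "sqrt (l2_norm_sq h)"] in_l2_bound rh r)
      then show ?thesis ..
    next
      case False
      have "norm (dS r g x) \<le> Z x" unfolding Z_def Mf_def using False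
        by (auto intro!: dS_bound[of g "sqrt (l2_norm_sq g)"] in_l2_bound rg r)
      then show ?thesis ..
    qed
  qed
  have lf: "(\<lambda>x. (Mf f x)\<^sup>2) summable_on UNIV" "(\<Sum>\<^sub>\<infinity>x. (Mf f x)\<^sup>2) \<le> E0 * lam"
    using Mf_l2[OF f] unfolding lam_def by auto
  have lm: "(\<lambda>x. (Mf m x)\<^sup>2) summable_on UNIV" "(\<Sum>\<^sub>\<infinity>x. (Mf m x)\<^sup>2) \<le> E0 * l2_norm_sq m"
    using Mf_l2[OF rm] by auto
  have lg: "(\<lambda>x. (Mf g x)\<^sup>2) summable_on UNIV" using Mf_l2[OF rg(1)] by auto
  have lh: "(\<lambda>x. (Mf h x)\<^sup>2) summable_on UNIV" using Mf_l2[OF rh(1)] by auto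
  have Z0: "0 \<le> Z x" for x unfolding Z_def using Mf_nonneg[OF rg(1)] Mf_nonneg[OF rh(1)] by auto
  have lZ: "(\<lambda>x. (Z x)\<^sup>2) summable_on UNIV"
    by (rule summable_on_comparison_test[where f="\<lambda>x. (Mf g x)\<^sup>2 + (Mf h x)\<^sup>2"])
       (use lg lh in \<open>auto intro: summable_on_add simp: Z_def\<close>)
  define X1 where "X1 = {x. x < c + int N}"
  have ZX1: "(\<lambda>x. (Mf h x)\<^sup>2) summable_on X1 \<and> (\<Sum>\<^sub>\<infinity>x\<in>X1. (Mf h x)\<^sup>2) \<le> tw R0 N * exp (16*R0) * l2_norm_sq h"
  proof -
    have "(\<lambda>x. (Mop R0 (\<lambda>y. norm (h y)) x)\<^sup>2) summable_on X1 \<and>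
          (\<Sum>\<^sub>\<infinity>x\<in>X1. (Mop R0 (\<lambda>y. norm (h y)) x)\<^sup>2) \<le> tw R0 N * exp (16*R0) * (\<Sum>\<^sub>\<infinity>x. (norm (h x))\<^sup>2)"
    proof (rule Mop_l2_local[OF R0])
      show "(\<lambda>x. (norm (h x))\<^sup>2) summable_on UNIV" using rh(1) unfolding in_l2_def .
      fix x z assume "x \<in> X1" "\<bar>z - x\<bar> < int N"
      then show "norm (h z) = 0" using NL unfolding X1_def h_def restr_def H_def by auto
    qed auto
    then show ?thesis unfolding Mf_def l2_norm_sq_def .
  qed
  have ZX2: "(\<lambda>x. (Mf g x)\<^sup>2) summable_on (-X1) \<and> (\<Sum>\<^sub>\<infinity>x\<in>-X1. (Mf g x)\<^sup>2) \<le> tw R0 N * exp (16*R0) * l2_norm_sq g"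
  proof -
    have "(\<lambda>x. (Mop R0 (\<lambda>y. norm (g y)) x)\<^sup>2) summable_on (-X1) \<and>
          (\<Sum>\<^sub>\<infinity>x\<in>-X1. (Mop R0 (\<lambda>y. norm (g y)) x)\<^sup>2) \<le> tw R0 N * exp (16*R0) * (\<Sum>\<^sub>\<infinity>x. (norm (g x))\<^sup>2)"
    proof (rule Mop_l2_local[OF R0])
      show "(\<lambda>x. (norm (g x))\<^sup>2) summable_on UNIV" using rg(1) unfolding in_l2_def .
      fix x z assume "x \<in> -X1" "\<bar>z - x\<bar> < int N"
      then show "norm (g z) = 0" unfolding X1_def g_def restr_def G_def by auto
    qed auto
    then show ?thesis unfolding Mf_def l2_norm_sq_def .
  qed
  have sumZ: "(\<Sum>\<^sub>\<infinity>x. (Z x)\<^sup>2) \<le> tw R0 N * exp (16*R0) * lam"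
  proof -
    have "(\<Sum>\<^sub>\<infinity>x. (Z x)\<^sup>2) = (\<Sum>\<^sub>\<infinity>x\<in>X1 \<union> -X1. (Z x)\<^sup>2)" by simp
    also have "\<dots> = (\<Sum>\<^sub>\<infinity>x\<in>X1. (Z x)\<^sup>2) + (\<Sum>\<^sub>\<infinity>x\<in>-X1. (Z x)\<^sup>2)"
      by (rule infsum_Un_disjoint) (use lZ in \<open>auto intro: summable_on_subset\<close>)
    also have "(\<Sum>\<^sub>\<infinity>x\<in>X1. (Z x)\<^sup>2) = (\<Sum>\<^sub>\<infinity>x\<in>X1. (Mf h x)\<^sup>2)"
      by (rule infsum_cong) (auto simp: Z_def X1_def)
    also have "(\<Sum>\<^sub>\<infinity>x\<in>-X1. (Z x)\<^sup>2) = (\<Sum>\<^sub>\<infinity>x\<in>-X1. (Mf g x)\<^sup>2)"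
      by (rule infsum_cong) (auto simp: Z_def X1_def)
    also have "(\<Sum>\<^sub>\<infinity>x\<in>X1. (Mf h x)\<^sup>2) + (\<Sum>\<^sub>\<infinity>x\<in>-X1. (Mf g x)\<^sup>2)
        \<le> tw R0 N * exp (16*R0) * l2_norm_sq h + tw R0 N * exp (16*R0) * l2_norm_sq g"
      using ZX1 ZX2 by linarith
    also have "\<dots> = tw R0 N * exp (16*R0) * (l2_norm_sq g + l2_norm_sq h)" by (simp add: algebra_simps)
    also have "\<dots> \<le> tw R0 N * exp (16*R0) * lam"
      using gh tw_nonneg[OF R0] by (intro mult_left_mono) auto
    finally show ?thesis .
  qed
  define D' where "D' x = 4 * K * (((Mf m x)\<^sup>2 + (Z x)\<^sup>2) / s + s * (Mf f x)\<^sup>2 / 2)" for x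
  have DD': "0 \<le> D x \<and> D x \<le> D' x" for x
  proof -
    have T0: "0 \<le> Mf f x" by (rule Mf_nonneg[OF f])
    have V0: "0 \<le> Mf m x" by (rule Mf_nonneg[OF rm])
    have T2: "(Mf f x)\<^sup>2 \<le> K" unfolding K_def lam_def by (rule Mf_pt[OF f])
    have "(Mf f x)^3 \<le> K * Mf f x"
      using mult_right_mono[OF T2 T0] by (simp add: power2_eq_square power3_eq_cube)
    then have "D x \<le> 4 * (Mf m x + Z x) * (K * Mf f x)" unfolding D_def
      using V0 Z0[of x] by (intro mult_left_mono) auto
    also have "\<dots> = 4 * K * ((Mf m x + Z x) * Mf f x)" by (simp add: algebra_simps)
    also have "(Mf m x + Z x) * Mf f x \<le> (Mf m x + Z x)\<^sup>2 / (2 * s) + s * (Mf f x)\<^sup>2 / 2"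
      by (rule amgm_s[OF s])
    also have "(Mf m x + Z x)\<^sup>2 / (2 * s) \<le> ((Mf m x)\<^sup>2 + (Z x)\<^sup>2) / s"
    proof -
      have "(Mf m x + Z x)\<^sup>2 \<le> 2 * ((Mf m x)\<^sup>2 + (Z x)\<^sup>2)"
      proof -
        have "0 \<le> (Mf m x - Z x)\<^sup>2" by simp
        then show ?thesis by (simp add: power2_eq_square algebra_simps)
      qed
      then show ?thesis using s by (simp add: field_simps)
    qed
    finally have "D x \<le> D' x" unfolding D'_def using K0 by (simp add: mult_left_mono)
    moreover have "0 \<le> D x" unfolding D_def using V0 Z0[of x] T0 by simp
    ultimately show ?thesis by simp
  qed
  have sD': "D' summable_on UNIV" unfolding D'_def
    using lm(1) lZ lf(1)
    by (intro summable_on_cmult_right summable_on_add summable_on_cmult_left summable_on_divide_r)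
       (auto intro: summable_on_add)
  have sD: "D summable_on UNIV"
    by (rule summable_on_comparison_test[OF sD']) (use DD' in auto)
  have sumD': "(\<Sum>\<^sub>\<infinity>x. D' x) = 4 * K * (((\<Sum>\<^sub>\<infinity>x. (Mf m x)\<^sup>2) + (\<Sum>\<^sub>\<infinity>x. (Z x)\<^sup>2)) / s + s * (\<Sum>\<^sub>\<infinity>x. (Mf f x)\<^sup>2) / 2)"
  proof -
    have a: "(\<lambda>x. (Mf m x)\<^sup>2 + (Z x)\<^sup>2) summable_on UNIV" using lm(1) lZ by (rule summable_on_add)
    have b: "(\<lambda>x. ((Mf m x)\<^sup>2 + (Z x)\<^sup>2) / s) summable_on UNIV" using a by (rule summable_on_divide_r)
    have c: "(\<lambda>x. s * (Mf f x)\<^sup>2 / 2) summable_on UNIV"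
      using lf(1) by (intro summable_on_divide_r summable_on_cmult_right)
    have "(\<Sum>\<^sub>\<infinity>x. D' x) = 4 * K * (\<Sum>\<^sub>\<infinity>x. ((Mf m x)\<^sup>2 + (Z x)\<^sup>2) / s + s * (Mf f x)\<^sup>2 / 2)"
      unfolding D'_def by (rule infsum_cmult_right') 
    also have "(\<Sum>\<^sub>\<infinity>x. ((Mf m x)\<^sup>2 + (Z x)\<^sup>2) / s + s * (Mf f x)\<^sup>2 / 2)
        = (\<Sum>\<^sub>\<infinity>x. ((Mf m x)\<^sup>2 + (Z x)\<^sup>2) / s) + (\<Sum>\<^sub>\<infinity>x. s * (Mf f x)\<^sup>2 / 2)"
      by (rule infsum_add[OF b c])
    also have "(\<Sum>\<^sub>\<infinity>x. ((Mf m x)\<^sup>2 + (Z x)\<^sup>2) / s) = ((\<Sum>\<^sub>\<infinity>x. (Mf m x)\<^sup>2) + (\<Sum>\<^sub>\<infinity>x. (Z x)\<^sup>2)) / s"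
      using infsum_add[OF lm(1) lZ] a by (simp add: infsum_divide_r)
    also have "(\<Sum>\<^sub>\<infinity>x. s * (Mf f x)\<^sup>2 / 2) = s * (\<Sum>\<^sub>\<infinity>x. (Mf f x)\<^sup>2) / 2"
      using lf(1) by (simp add: infsum_divide_r infsum_cmult_right)
    finally show ?thesis .
  qed
  have "Qr f \<le> (\<Sum>\<^sub>\<infinity>x. qv g x + qv h x + mu * D x)" unfolding Qr_def
    by (rule infsum_mono[OF Qr_summable[OF f]])
       (use qpt Qr_summable[OF rg(1)] Qr_summable[OF rh(1)] sD in \<open>auto intro!: summable_on_add summable_on_cmult_right\<close>)
  also have "\<dots> = Qr g + Qr h + mu * (\<Sum>\<^sub>\<infinity>x. D x)" unfolding Qr_def
    using Qr_summable[OF rg(1)] Qr_summable[OF rh(1)] sD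
    by (simp add: infsum_add summable_on_add summable_on_cmult_right infsum_cmult_right)
  also have "mu * (\<Sum>\<^sub>\<infinity>x. D x) \<le> mu * (\<Sum>\<^sub>\<infinity>x. D' x)"
    by (intro mult_left_mono infsum_mono sD sD' mu_nonneg) (use DD' in auto)
  also have "(\<Sum>\<^sub>\<infinity>x. D' x) \<le> 4 * K * ((E0 * l2_norm_sq m + tw R0 N * exp (16*R0) * lam) / s + s * (E0 * lam) / 2)"
    unfolding sumD'
    using lm(2) sumZ lf(2) s K0
    by (intro mult_left_mono add_mono divide_right_mono mult_left_mono) auto
  finally have F: "Qr f \<le> Qr g + Qr h + mu * (4 * K * ((E0 * l2_norm_sq m + tw R0 N * exp (16*R0) * lam) / s + s * (E0 * lam) / 2))"
    using mu_nonneg by (simp add: mult_left_mono)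
  show ?thesis
    by (rule order_trans[OF F]) (simp add: g_def h_def m_def G_def H_def Mi_def lam_def K_def mult_ac)
qed

end


definition mass :: "(int \<Rightarrow> complex) \<Rightarrow> int set \<Rightarrow> real" where
  "mass f A = (\<Sum>\<^sub>\<infinity>x\<in>A. (norm (f x))\<^sup>2)"

lemma mass_summable: "in_l2 f \<Longrightarrow> (\<lambda>x. (norm (f x))\<^sup>2) summable_on A"
  unfolding in_l2_def by (rule summable_on_subset) auto

lemma mass_nonneg: "mass f A \<ge> 0"
  unfolding mass_def by (rule infsum_nonneg) auto

lemma mass_mono: "in_l2 f \<Longrightarrow> A \<subseteq> B \<Longrightarrow> mass f A \<le> mass f B"
  unfolding mass_def by (rule infsum_mono_neutral) (auto intro: mass_summable)

lemma mass_UNIV: "mass f UNIV = l2_norm_sq f"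
  by (simp add: mass_def l2_norm_sq_def)

lemma mass_restr: "in_l2 f \<Longrightarrow> l2_norm_sq (restr A f) = mass f A"
  using restr_l2 unfolding mass_def by blast

lemma mass_union: "in_l2 f \<Longrightarrow> A \<inter> B = {} \<Longrightarrow> mass f (A \<union> B) = mass f A + mass f B"
  unfolding mass_def by (rule infsum_Un_disjoint) (auto intro: mass_summable)

lemma mass_compl: "in_l2 f \<Longrightarrow> mass f (-A) = l2_norm_sq f - mass f A"
  using mass_union[of f A "-A"] mass_UNIV[of f] by (simp add: Un_commute)

lemma tight_single:
  assumes f: "in_l2 f" and e: "e > 0"
  shows "\<exists>T::nat. mass f {x. \<bar>x\<bar> > int T} \<le> e"
proof -
  obtain F where F: "finite F" "dist (sum (\<lambda>x. (norm (f x))\<^sup>2) F) (l2_norm_sq f) \<le> e"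
    using infsum_finite_approximation[OF f[unfolded in_l2_def] e] unfolding l2_norm_sq_def by auto
  obtain T :: nat where T: "\<And>x. x \<in> F \<Longrightarrow> \<bar>x\<bar> \<le> int T"
  proof -
    have "finite (nat ` abs ` F)" using F(1) by simp
    then obtain T where "\<forall>y\<in>nat ` abs ` F. y \<le> T" using finite_nat_set_iff_bounded_le by blast
    then show ?thesis using that[of T] by force
  qed
  have "sum (\<lambda>x. (norm (f x))\<^sup>2) F \<le> mass f {x. \<bar>x\<bar> \<le> int T}"
    unfolding mass_def by (rule sum_le_infsum_nonneg) (use F T mass_summable[OF f] in auto)
  moreover have "mass f {x. \<bar>x\<bar> > int T} = l2_norm_sq f - mass f {x. \<bar>x\<bar> \<le> int T}"
  proof -
    have "{x. \<bar>x\<bar> > int T} = - {x. \<bar>x\<bar> \<le> int T}" by auto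
    then show ?thesis using mass_compl[OF f] by simp
  qed
  moreover have "l2_norm_sq f - sum (\<lambda>x. (norm (f x))\<^sup>2) F \<le> e" using F(2) by (simp add: dist_real_def)
  ultimately have "mass f {x. \<bar>x\<bar> > int T} \<le> e" by linarith
  then show ?thesis by blast
qed

lemma blocks_bound:
  assumes f: "in_l2 f" and L: "L > 0"
    and blk: "\<And>j. j < J \<Longrightarrow> mass f {a + int j * int L ..< a + int (Suc j) * int L} > \<eta>"
  shows "real J * \<eta> \<le> l2_norm_sq f"
proof -
  have "real j * \<eta> \<le> mass f {a ..< a + int j * int L}" if "j \<le> J" for j
    using that
  proof (induction j)
    case 0 then show ?case using mass_nonneg by simp
  next
    case (Suc j)
    have "{a ..< a + int (Suc j) * int L} = {a ..< a + int j * int L} \<union> {a + int j * int L ..< a + int (Suc j) * int L}"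
    proof (rule ivl_disj_un_two(3)[symmetric])
      show "a \<le> a + int j * int L" by simp
      show "a + int j * int L \<le> a + int (Suc j) * int L" by (simp add: algebra_simps)
    qed
    then have "mass f {a ..< a + int (Suc j) * int L} = mass f {a ..< a + int j * int L} + mass f {a + int j * int L ..< a + int (Suc j) * int L}"
      using mass_union[OF f] by (simp add: ivl_disj_int)
    moreover have "mass f {a + int j * int L ..< a + int (Suc j) * int L} > \<eta>" using blk Suc by simp
    moreover have "real j * \<eta> \<le> mass f {a ..< a + int j * int L}" using Suc by simp
    ultimately show ?case by (simp add: algebra_simps)
  qed
  then have "real J * \<eta> \<le> mass f {a ..< a + int J * int L}" by simp
  also have "\<dots> \<le> l2_norm_sq f" using mass_mono[OF f, of _ UNIV] mass_UNIV by simp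
  finally show ?thesis .
qed


lemma comb:
  assumes f: "in_l2 f" and lam: "l2_norm_sq f = lam" and e: "0 < e" "2*e < lam"
    and eta: "\<eta> > 0" and L: "L > 0"
    and H: "\<And>c. mass f {c ..< c + int L} > \<eta> \<or> mass f {x. x < c} < e \<or> mass f {x. c + int L \<le> x} < e"
  shows "\<exists>\<xi>. mass f {x. \<bar>x - \<xi>\<bar> > int (L * (nat \<lceil>lam/\<eta>\<rceil> + 2))} < 2*e"
proof -
  define left where "left c = mass f {x. x < c}" for c
  define right where "right d = mass f {x. d \<le> x}" for d
  have left_mono: "left c \<le> left c'" if "c \<le> c'" for c c'
    unfolding left_def by (rule mass_mono[OF f]) (use that in auto)
  have right_anti: "right d' \<le> right d" if "d \<le> d'" for d d'
    unfolding right_def by (rule mass_mono[OF f]) (use that in auto)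
  have lr: "left c = lam - right c" for c
  proof -
    have "{x. x < c} = - {x. c \<le> x}" by auto
    then show ?thesis unfolding left_def right_def using mass_compl[OF f] lam by simp
  qed
  obtain T :: nat where T: "mass f {x. \<bar>x\<bar> > int T} \<le> e/2"
    using tight_single[OF f, of "e/2"] e by auto
  have s1: "{x. x < - int T} \<subseteq> {x. \<bar>x\<bar> > int T}" by auto
  have s2: "{x. int T + 1 \<le> x} \<subseteq> {x. \<bar>x\<bar> > int T}" by auto
  have lT: "left (- int T) \<le> e/2"
    using mass_mono[OF f s1] T unfolding left_def by linarith
  have rT: "right (int T + 1) \<le> e/2"
    using mass_mono[OF f s2] T unfolding right_def by linarith
  define P where "P k = (left (- int T + int k) \<ge> e)" for k :: nat
  have P1: "P (2*T+1)" unfolding P_def using lr[of "int T + 1"] rT e by (simp add: algebra_simps)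
  define k0 where "k0 = (LEAST k. P k)"
  have Pk0: "P k0" unfolding k0_def using P1 by (rule LeastI)
  have k0pos: "k0 > 0" using Pk0 lT e unfolding P_def by (cases k0) auto
  define a where "a = - int T + int k0"
  have la: "left a \<ge> e" using Pk0 unfolding P_def a_def by simp
  have la1: "left (a - 1) < e"
  proof -
    have "k0 - 1 < k0" using k0pos by simp
    then have "\<not> P (k0 - 1)" unfolding k0_def by (rule not_less_Least)
    then show ?thesis using k0pos unfolding P_def a_def by (simp add: of_nat_diff algebra_simps)
  qed
  have aT: "a \<ge> - int T" unfolding a_def by simp
  define Q where "Q k = (right (a + int k + int L) < e)" for k :: nat
  have Q1: "Q (2*T+1)"
  proof -
    have "right (a + int (2*T+1) + int L) \<le> right (int T + 1)" using aT by (intro right_anti) auto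
    then show ?thesis unfolding Q_def using rT e by simp
  qed
  define k1 where "k1 = (LEAST k. Q k)"
  have Qk1: "Q k1" unfolding k1_def using Q1 by (rule LeastI)
  define b where "b = a + int k1"
  have rb: "right (b + int L) < e" using Qk1 unfolding Q_def b_def by simp
  have blk: "mass f {c ..< c + int L} > \<eta>" if "a \<le> c" "c < b" for c
  proof -
    define k where "k = nat (c - a)"
    have k: "c = a + int k" "k < k1" using that unfolding b_def k_def by auto
    have "\<not> Q k" using k(2) unfolding k1_def by (rule not_less_Least)
    then have "right (c + int L) \<ge> e" unfolding Q_def k(1) by simp
    moreover have "left c \<ge> e" using la left_mono[OF that(1)] by simp
    ultimately show ?thesis using H[of c] unfolding left_def right_def by (auto simp: add.commute)
  qed
  define J where "J = k1 div L"
  have JL: "J * L \<le> k1" unfolding J_def by (metis div_mult_mod_eq le_add1)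
  have k1J: "k1 < L * (J + 1)"
  proof -
    have "k1 = L * J + k1 mod L" unfolding J_def by simp
    moreover have "k1 mod L < L" using L by simp
    ultimately show ?thesis by (simp add: algebra_simps)
  qed
  have "real J * \<eta> \<le> l2_norm_sq f"
  proof (rule blocks_bound[OF f L])
    fix j assume j: "j < J"
    have jl: "(j+1) * L \<le> k1" using mult_le_mono1[of "j+1" J L] j JL by simp
    have "mass f {a + int j * int L ..< a + int j * int L + int L} > \<eta>"
    proof (rule blk)
      show "a \<le> a + int j * int L" by simp
      have "j * L < k1" using jl L by (simp add: algebra_simps)
      then have "int j * int L < int k1" by (metis of_nat_less_iff of_nat_mult)
      then show "a + int j * int L < b" unfolding b_def by simp
    qed
    then show "mass f {a + int j * int L ..< a + int (Suc j) * int L} > \<eta>" by (simp add: algebra_simps)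
  qed
  then have "real J \<le> lam / \<eta>" using eta lam by (simp add: field_simps)
  then have JC: "int J \<le> \<lceil>lam / \<eta>\<rceil>" by linarith
  define R where "R = L * (nat \<lceil>lam/\<eta>\<rceil> + 2)"
  have RJ: "int R \<ge> int L * (int J + 2)"
  proof -
    have "int J \<le> int (nat \<lceil>lam/\<eta>\<rceil>)" using JC by linarith
    then have "int L * (int J + 2) \<le> int L * (int (nat \<lceil>lam/\<eta>\<rceil>) + 2)" by (intro mult_left_mono) auto
    moreover have "int R = int L * (int (nat \<lceil>lam/\<eta>\<rceil>) + 2)" unfolding R_def by (simp add: algebra_simps)
    ultimately show ?thesis by simp
  qed
  have sub: "{x. \<bar>x - (a - 1)\<bar> > int R} \<subseteq> {x. x < a - 1} \<union> {x. b + int L \<le> x}"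
  proof
    fix x assume "x \<in> {x. \<bar>x - (a - 1)\<bar> > int R}"
    then have x: "\<bar>x - (a - 1)\<bar> > int R" by simp
    have "k1 + 1 \<le> L * (J + 1)" using k1J by simp
    then have "int (k1 + 1) \<le> int (L * (J + 1))" by (simp only: of_nat_le_iff)
    then have "int k1 + 1 \<le> int L * (int J + 1)" by (simp add: algebra_simps)
    then have "b + int L \<le> a - 1 + int R" using RJ unfolding b_def by (simp add: algebra_simps)
    then show "x \<in> {x. x < a - 1} \<union> {x. b + int L \<le> x}" using x by auto
  qed
  have "mass f {x. \<bar>x - (a - 1)\<bar> > int R} \<le> mass f ({x. x < a - 1} \<union> {x. b + int L \<le> x})"
    by (rule mass_mono[OF f sub])
  also have "\<dots> = left (a - 1) + right (b + int L)"
    unfolding left_def right_def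
    by (rule mass_union[OF f]) (use L in \<open>auto simp: b_def\<close>)
  also have "\<dots> < 2 * e" using la1 rb by simp
  finally show ?thesis unfolding R_def by blast
qed


lemma frac_le: "0 \<le> X \<Longrightarrow> 0 \<le> t \<Longrightarrow> X * (t / (X + 1)) \<le> (t::real)"
  by (simp add: field_simps mult_right_mono)

context qsetup
begin

lemma uniform_conc:
  assumes mu0: "emeasure \<mu> UNIV \<noteq> 0" and lam: "lam > 0"
    and f: "\<And>n. in_l2 (f n)" "\<And>n. l2_norm_sq (f n) = lam"
    and lim: "(\<lambda>n. Qr (f n)) \<longlonglongrightarrow> Pd \<mu> lam"
    and eps: "0 < \<epsilon>" "\<epsilon> < lam"
  shows "\<exists>R::nat. \<forall>n. \<exists>\<xi>. mass (f n) {x. \<bar>x - \<xi>\<bar> > int R} \<le> \<epsilon>"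
proof -
  define e where "e = \<epsilon> / 2"
  have e: "0 < e" "2*e < lam" using eps unfolding e_def by auto
  define P where "P = Pd \<mu> lam"
  have P: "P > 0" unfolding P_def by (rule Pd_pos[OF mu0 lam])
  define \<delta> where "\<delta> = 2 * P * e\<^sup>2 / lam\<^sup>2"
  have \<delta>: "\<delta> > 0" unfolding \<delta>_def using P e lam by simp
  define C where "C = 4 * mu * (E0 * lam)"
  have C: "C \<ge> 0" unfolding C_def using mu_nonneg E0_pos lam by simp
  define s where "s = \<delta> / 3 / (C * E0 * lam + 1)"
  have s: "s > 0" unfolding s_def using \<delta> C E0_pos lam by (simp add: add_nonneg_pos)
  define \<eta> where "\<eta> = \<delta> * s / 6 / (C * E0 + 1)"
  have \<eta>: "\<eta> > 0" unfolding \<eta>_def using \<delta> s C E0_pos by (simp add: add_nonneg_pos)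
  define bnd where "bnd = \<delta> * s / 6 / (C * exp (16*R0) * lam + 1)"
  have bnd: "bnd > 0" unfolding bnd_def using \<delta> s C lam by (simp add: add_nonneg_pos)
  obtain N where N: "\<forall>n\<ge>N. norm (tw R0 n - 0) < bnd"
    using LIMSEQ_D[OF tw_lim[of R0] bnd] by auto
  then have "norm (tw R0 N - 0) < bnd" by simp
  then have twN: "tw R0 N \<le> bnd" by simp
  define L where "L = 2 * N + 1"
  have L: "L > 0" "2 * N \<le> L" unfolding L_def by auto
  have Err: "C * ((E0 * \<eta>' + tw R0 N * exp (16*R0) * lam) / s + s * (E0 * lam) / 2) \<le> \<delta> / 2"
    if "0 \<le> \<eta>'" "\<eta>' \<le> \<eta>" for \<eta>'
  proof -
    have "C * (E0 * \<eta>' / s) \<le> C * E0 * (\<eta> / s)"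
      using that C E0_pos s by (simp add: mult_left_mono divide_right_mono mult.assoc)
    also have "\<eta> / s = (\<delta>/6) / (C * E0 + 1)" unfolding \<eta>_def using s by simp
    also have "C * E0 * ((\<delta>/6) / (C * E0 + 1)) \<le> \<delta>/6"
      by (rule frac_le) (use C E0_pos \<delta> in auto)
    finally have t1: "C * (E0 * \<eta>' / s) \<le> \<delta>/6" .
    have "C * (tw R0 N * exp (16*R0) * lam / s) \<le> C * exp (16*R0) * lam * (bnd / s)"
      using twN C s lam tw_nonneg[OF R0] by (simp add: mult_left_mono divide_right_mono mult_ac mult_right_mono)
    also have "bnd / s = (\<delta>/6) / (C * exp (16*R0) * lam + 1)" unfolding bnd_def using s by simp
    also have "C * exp (16*R0) * lam * ((\<delta>/6) / (C * exp (16*R0) * lam + 1)) \<le> \<delta>/6"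
      by (rule frac_le) (use C lam \<delta> in auto)
    finally have t2: "C * (tw R0 N * exp (16*R0) * lam / s) \<le> \<delta>/6" .
    have "C * (s * (E0 * lam) / 2) = (C * E0 * lam * ((\<delta>/3) / (C * E0 * lam + 1))) / 2"
      unfolding s_def by (simp add: mult_ac)
    also have "C * E0 * lam * ((\<delta>/3) / (C * E0 * lam + 1)) \<le> \<delta>/3"
      by (rule frac_le) (use C E0_pos lam \<delta> in auto)
    finally have t3: "C * (s * (E0 * lam) / 2) \<le> \<delta>/6" by simp
    have "C * ((E0 * \<eta>' + tw R0 N * exp (16*R0) * lam) / s + s * (E0 * lam) / 2)
        = C * (E0 * \<eta>' / s) + C * (tw R0 N * exp (16*R0) * lam / s) + C * (s * (E0 * lam) / 2)"
      by (simp add: algebra_simps add_divide_distrib)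
    then show ?thesis using t1 t2 t3 by linarith
  qed
  obtain n0 where n0: "\<forall>n\<ge>n0. dist (Qr (f n)) P < \<delta>/2"
    using lim[unfolded P_def[symmetric]] \<delta> by (metis LIMSEQ_iff_nz dist_real_def half_gt_zero real_norm_def)
  have big: "Qr (f n) > P - \<delta>/2" if "n \<ge> n0" for n
  proof -
    have "dist (Qr (f n)) P < \<delta>/2" using n0 that by blast
    then have "\<bar>Qr (f n) - P\<bar> < \<delta>/2" by (simp add: dist_real_def)
    then show ?thesis by linarith
  qed
  have H: "mass (f n) {c ..< c + int L} > \<eta> \<or> mass (f n) {x. x < c} < e \<or> mass (f n) {x. c + int L \<le> x} < e"
    if n: "n \<ge> n0" for n c
  proof (rule ccontr)
    assume "\<not> ?thesis"
    then have hb: "mass (f n) {c ..< c + int L} \<le> \<eta>" and hl: "mass (f n) {x. x < c} \<ge> e"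
      and hr: "mass (f n) {x. c + int L \<le> x} \<ge> e" by auto
    define \<alpha> where "\<alpha> = mass (f n) {x. x < c}"
    define \<beta> where "\<beta> = mass (f n) {x. c + int L \<le> x}"
    define m where "m = mass (f n) {x. c \<le> x \<and> x < c + int L}"
    have mb: "m = mass (f n) {c ..< c + int L}" unfolding m_def by (rule arg_cong[where f="mass (f n)"]) auto
    have m0: "0 \<le> m" unfolding m_def by (rule mass_nonneg)
    have sumab: "\<alpha> + m + \<beta> = lam"
    proof -
      have "\<alpha> + m = mass (f n) ({x. x < c} \<union> {x. c \<le> x \<and> x < c + int L})"
        unfolding \<alpha>_def m_def by (rule mass_union[OF f(1), symmetric]) auto
      also have "\<dots> + \<beta> = mass (f n) (({x. x < c} \<union> {x. c \<le> x \<and> x < c + int L}) \<union> {x. c + int L \<le> x})"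
        unfolding \<beta>_def by (rule mass_union[OF f(1), symmetric]) auto
      also have "({x. x < c} \<union> {x. c \<le> x \<and> x < c + int L}) \<union> {x. c + int L \<le> x} = UNIV" by auto
      finally show ?thesis using mass_UNIV[of "f n"] f(2) by simp
    qed
    have est: "Qr (f n) \<le> Qr (restr {x. x < c} (f n)) + Qr (restr {x. c + int L \<le> x} (f n))
       + C * ((E0 * m + tw R0 N * exp (16*R0) * lam) / s + s * (E0 * lam) / 2)"
      using split_estimate[OF f(1)[of n] L(2) s, where c=c] f(2) mass_restr[OF f(1)]
      unfolding C_def m_def by (simp add: mult.assoc)
    have qg: "Qr (restr {x. x < c} (f n)) \<le> P * (\<alpha> / lam)\<^sup>2"
      using Qr_le_Pd_scaled[OF mu0 lam, of "restr {x. x < c} (f n)"] restr_l2[OF f(1)]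
        mass_restr[OF f(1)] unfolding P_def \<alpha>_def by auto
    have qh: "Qr (restr {x. c + int L \<le> x} (f n)) \<le> P * (\<beta> / lam)\<^sup>2"
      using Qr_le_Pd_scaled[OF mu0 lam, of "restr {x. c + int L \<le> x} (f n)"] restr_l2[OF f(1)]
        mass_restr[OF f(1)] unfolding P_def \<beta>_def by auto
    have "P * (\<alpha> / lam)\<^sup>2 + P * (\<beta> / lam)\<^sup>2 \<le> P - \<delta>"
    proof -
      have a0: "\<alpha> \<ge> e" "\<beta> \<ge> e" using hl hr unfolding \<alpha>_def \<beta>_def by auto
      have e1: "\<alpha>\<^sup>2 + \<beta>\<^sup>2 = (\<alpha> + \<beta>)\<^sup>2 - 2 * (\<alpha> * \<beta>)" by (simp add: power2_eq_square algebra_simps)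
      have e2: "(\<alpha> + \<beta>)\<^sup>2 \<le> lam\<^sup>2" using sumab m0 a0 e by (intro power_mono) auto
      have "e * e \<le> \<alpha> * \<beta>" using a0 e by (intro mult_mono) auto
      then have e3: "e\<^sup>2 \<le> \<alpha> * \<beta>" by (simp add: power2_eq_square)
      have ab: "\<alpha>\<^sup>2 + \<beta>\<^sup>2 \<le> lam\<^sup>2 - 2 * e\<^sup>2" using e1 e2 e3 by linarith
      have "P * (\<alpha> / lam)\<^sup>2 + P * (\<beta> / lam)\<^sup>2 = P * (\<alpha>\<^sup>2 + \<beta>\<^sup>2) / lam\<^sup>2"
        by (simp add: power_divide algebra_simps add_divide_distrib)
      also have "\<dots> \<le> P * (lam\<^sup>2 - 2 * e\<^sup>2) / lam\<^sup>2"
        using ab P lam by (intro divide_right_mono mult_left_mono) auto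
      also have "\<dots> = P - \<delta>" unfolding \<delta>_def using lam by (simp add: field_simps)
      finally show ?thesis .
    qed
    moreover have "C * ((E0 * m + tw R0 N * exp (16*R0) * lam) / s + s * (E0 * lam) / 2) \<le> \<delta>/2"
      by (rule Err) (use m0 hb mb in auto)
    ultimately have "Qr (f n) \<le> P - \<delta>/2" using est qg qh by linarith
    then show False using big[OF n] by simp
  qed
  define R1 where "R1 = L * (nat \<lceil>lam/\<eta>\<rceil> + 2)"
  have large: "\<exists>\<xi>. mass (f n) {x. \<bar>x - \<xi>\<bar> > int R1} \<le> \<epsilon>" if nn: "n \<ge> n0" for n
  proof -
    obtain \<xi> where "mass (f n) {x. \<bar>x - \<xi>\<bar> > int R1} < 2 * e"
      using comb[OF f(1) f(2) e \<eta> L(1) H[OF nn]] unfolding R1_def by blast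
    then have "mass (f n) {x. \<bar>x - \<xi>\<bar> > int R1} \<le> \<epsilon>" unfolding e_def by simp
    then show ?thesis by blast
  qed
  have "\<forall>n\<in>{..<n0}. \<exists>T::nat. mass (f n) {x. \<bar>x\<bar> > int T} \<le> \<epsilon>"
    using tight_single[OF f(1)] eps by blast
  then obtain T where T: "\<And>n. n < n0 \<Longrightarrow> mass (f n) {x. \<bar>x\<bar> > int (T n)} \<le> \<epsilon>"
    by (metis lessThan_iff)
  define R where "R = R1 + (\<Sum>k<n0. T k)"
  have "\<exists>\<xi>. mass (f n) {x. \<bar>x - \<xi>\<bar> > int R} \<le> \<epsilon>" for n
  proof (cases "n \<ge> n0")
    case True
    then obtain \<xi> where \<xi>: "mass (f n) {x. \<bar>x - \<xi>\<bar> > int R1} \<le> \<epsilon>" using large by blast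
    have RR: "int R1 \<le> int R" unfolding R_def by (simp add: sum_nonneg)
    have "mass (f n) {x. \<bar>x - \<xi>\<bar> > int R} \<le> mass (f n) {x. \<bar>x - \<xi>\<bar> > int R1}"
      by (rule mass_mono[OF f(1)]) (use RR in auto)
    then have "mass (f n) {x. \<bar>x - \<xi>\<bar> > int R} \<le> \<epsilon>" using \<xi> by linarith
    then show ?thesis by blast
  next
    case False
    then have n: "n < n0" by simp
    have "T n \<le> (\<Sum>k<n0. T k)" using n by (intro member_le_sum) auto
    then have "T n \<le> R" unfolding R_def by simp
    then have RR: "int (T n) \<le> int R" by simp
    have "mass (f n) {x. \<bar>x - 0\<bar> > int R} \<le> mass (f n) {x. \<bar>x\<bar> > int (T n)}"
      by (intro mass_mono[OF f(1)]) (use RR in auto)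
    then have "mass (f n) {x. \<bar>x - 0\<bar> > int R} \<le> \<epsilon>" using T[OF n] by linarith
    then show ?thesis by blast
  qed
  then show ?thesis by blast
qed

end


lemma final_tail:
  fixes f :: "nat \<Rightarrow> int \<Rightarrow> complex" and lam :: real
  assumes lam: "lam > 0" and f: "\<And>n. in_l2 (f n)" "\<And>n. l2_norm_sq (f n) = lam"
    and U: "\<And>\<epsilon>. 0 < \<epsilon> \<Longrightarrow> \<epsilon> < lam \<Longrightarrow> \<exists>R::nat. \<forall>n. \<exists>\<xi>. mass (f n) {x. \<bar>x - \<xi>\<bar> > int R} \<le> \<epsilon>"
  shows "\<exists>\<xi> :: nat \<Rightarrow> int.
    ((\<lambda>R::real. SUP n. (\<Sum>\<^sub>\<infinity>x\<in>{x. \<bar>real_of_int (x - \<xi> n)\<bar> > R}. (norm (f n x))\<^sup>2))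
       \<longlongrightarrow> 0) at_top"
proof -
  obtain R0 :: nat where "\<forall>n. \<exists>\<xi>. mass (f n) {x. \<bar>x - \<xi>\<bar> > int R0} \<le> lam/3"
    using U[of "lam/3"] lam by auto
  then obtain \<xi> where \<xi>: "\<And>n. mass (f n) {x. \<bar>x - \<xi> n\<bar> > int R0} \<le> lam/3" by metis
  have conc: "\<exists>R::int. \<forall>n. mass (f n) {x. \<bar>x - \<xi> n\<bar> > R} \<le> \<epsilon>"
    if eps: "0 < \<epsilon>" "\<epsilon> \<le> lam/3" for \<epsilon>
  proof -
    obtain Re :: nat where "\<forall>n. \<exists>\<xi>. mass (f n) {x. \<bar>x - \<xi>\<bar> > int Re} \<le> \<epsilon>"
      using U[of \<epsilon>] eps lam by auto
    then obtain \<xi>' where \<xi>': "\<And>n. mass (f n) {x. \<bar>x - \<xi>' n\<bar> > int Re} \<le> \<epsilon>" by metis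
    have "mass (f n) {x. \<bar>x - \<xi> n\<bar> > int R0 + 2 * int Re} \<le> \<epsilon>" for n
    proof -
      have close: "\<bar>\<xi> n - \<xi>' n\<bar> \<le> int R0 + int Re"
      proof (rule ccontr)
        assume far: "\<not> ?thesis"
        define B1 where "B1 = {x. \<bar>x - \<xi> n\<bar> \<le> int R0}"
        define B2 where "B2 = {x. \<bar>x - \<xi>' n\<bar> \<le> int Re}"
        have disj: "B1 \<inter> B2 = {}" using far unfolding B1_def B2_def by auto
        have m1: "mass (f n) B1 \<ge> 2*lam/3"
        proof -
          have "B1 = - {x. \<bar>x - \<xi> n\<bar> > int R0}" unfolding B1_def by auto
          then show ?thesis using mass_compl[OF f(1), of n] \<xi>[of n] f(2)[of n] by simp
        qed
        have m2: "mass (f n) B2 \<ge> 2*lam/3"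
        proof -
          have "B2 = - {x. \<bar>x - \<xi>' n\<bar> > int Re}" unfolding B2_def by auto
          then show ?thesis using mass_compl[OF f(1), of n] \<xi>'[of n] f(2)[of n] eps by simp
        qed
        have "mass (f n) (B1 \<union> B2) = mass (f n) B1 + mass (f n) B2" by (rule mass_union[OF f(1) disj])
        moreover have "mass (f n) (B1 \<union> B2) \<le> lam" using mass_mono[OF f(1), of "B1 \<union> B2" UNIV] mass_UNIV f(2) by simp
        ultimately show False using m1 m2 lam by simp
      qed
      have "{x. \<bar>x - \<xi> n\<bar> > int R0 + 2 * int Re} \<subseteq> {x. \<bar>x - \<xi>' n\<bar> > int Re}"
        using close by auto
      then have "mass (f n) {x. \<bar>x - \<xi> n\<bar> > int R0 + 2 * int Re} \<le> mass (f n) {x. \<bar>x - \<xi>' n\<bar> > int Re}"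
        by (rule mass_mono[OF f(1)])
      then show ?thesis using \<xi>'[of n] by linarith
    qed
    then show ?thesis by blast
  qed
  define F where "F R n = mass (f n) {x. \<bar>real_of_int (x - \<xi> n)\<bar> > R}" for R n
  have F0: "0 \<le> F R n" for R n unfolding F_def by (rule mass_nonneg)
  have Fb: "F R n \<le> lam" for R n
    unfolding F_def using mass_mono[OF f(1), of _ UNIV] mass_UNIV f(2) by (metis subset_UNIV)
  have bdd: "bdd_above (range (F R))" for R by (rule bdd_aboveI[where M=lam]) (use Fb in auto)
  have "((\<lambda>R. SUP n. F R n) \<longlongrightarrow> 0) at_top"
  proof (rule order_tendstoI)
    fix a :: real assume "a < 0"
    have "a < (SUP n. F R n)" for R
      using F0[of R 0] cSUP_upper[OF _ bdd[of R], of 0] \<open>a < 0\<close> by simp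
    then show "\<forall>\<^sub>F R in at_top. a < (SUP n. F R n)" by simp
  next
    fix a :: real assume a: "a > 0"
    define \<epsilon> where "\<epsilon> = min (a/2) (lam/3)"
    have \<epsilon>: "0 < \<epsilon>" "\<epsilon> \<le> lam/3" "\<epsilon> < a" unfolding \<epsilon>_def using a lam by auto
    obtain Ri :: int where Ri: "\<And>n. mass (f n) {x. \<bar>x - \<xi> n\<bar> > Ri} \<le> \<epsilon>" using conc[OF \<epsilon>(1,2)] by blast
    have B: "(SUP n. F R n) < a" if R: "R \<ge> real_of_int Ri" for R
    proof -
      have "F R n \<le> \<epsilon>" for n
      proof -
        have "{x. \<bar>real_of_int (x - \<xi> n)\<bar> > R} \<subseteq> {x. \<bar>x - \<xi> n\<bar> > Ri}"
        proof
          fix x assume "x \<in> {x. \<bar>real_of_int (x - \<xi> n)\<bar> > R}"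
          then have "real_of_int \<bar>x - \<xi> n\<bar> > real_of_int Ri" using R by simp
          then show "x \<in> {x. \<bar>x - \<xi> n\<bar> > Ri}" by simp
        qed
        then show ?thesis unfolding F_def using mass_mono[OF f(1)] Ri[of n] by (meson order_trans)
      qed
      then have "(SUP n. F R n) \<le> \<epsilon>" by (intro cSUP_least) auto
      then show ?thesis using \<epsilon> by simp
    qed
    show "\<forall>\<^sub>F R in at_top. (SUP n. F R n) < a"
      by (rule eventually_mono[OF eventually_ge_at_top[of "real_of_int Ri"] B])
  qed
  then show ?thesis unfolding F_def mass_def by blast
qed

theorem proposition2p4:
  fixes \<mu> :: "real measure" and lam :: real and f :: "nat \<Rightarrow> int \<Rightarrow> complex"
  assumes "sets \<mu> = sets borel"
    and "emeasure \<mu> UNIV < \<infinity>"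
    and "emeasure \<mu> UNIV \<noteq> 0"
    and "\<exists>R::real. emeasure \<mu> (- {-R..R}) = 0"
    and "lam > 0"
    and "\<And>n. in_l2 (f n)"
    and "\<And>n. l2_norm_sq (f n) = lam"
    and "(\<lambda>n. Qd \<mu> (f n) (f n) (f n) (f n)) \<longlonglongrightarrow> complex_of_real (Pd \<mu> lam)"
  shows "\<exists>\<xi> :: nat \<Rightarrow> int.
    ((\<lambda>R::real. SUP n. (\<Sum>\<^sub>\<infinity>x\<in>{x. \<bar>real_of_int (x - \<xi> n)\<bar> > R}. (norm (f n x))\<^sup>2))
       \<longlongrightarrow> 0) at_top"
proof -
  obtain R where R: "emeasure \<mu> (- {-R..R}) = 0" using assms(4) by blast
  have supp: "AE r in \<mu>. \<bar>r\<bar> \<le> \<bar>R\<bar>"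
  proof (rule AE_I')
    show "- {-R..R} \<in> null_sets \<mu>" using R assms(1) by (auto simp: null_sets_def)
    show "{r \<in> space \<mu>. \<not> \<bar>r\<bar> \<le> \<bar>R\<bar>} \<subseteq> - {-R..R}" by auto
  qed
  interpret qsetup \<mu> "\<bar>R\<bar>"
    by unfold_locales (use assms(1,2) supp in auto)
  have lim: "(\<lambda>n. Qr (f n)) \<longlonglongrightarrow> Pd \<mu> lam"
    using tendsto_Re[OF assms(8)] Qd_eq[OF assms(6)] by simp
  show ?thesis
    by (rule final_tail[OF assms(5) assms(6) assms(7)])
       (rule uniform_conc[OF assms(3) assms(5) assms(6) assms(7) lim], auto)
qed


end
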